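(* Let $(W,S)$ be a finitely generated Coxeter system and $u\le v$ in $(W,\le)$. The Möbius function of $(W,\le)$ satisfies $$\mu(u,v)=\begin{cases}(-1)^{|S(v)|-|S(u)|}&\text{if } S(u)=S(v)\setminus \mathrm{Des}(v^{S(u)})\text{ or } u=v,\\ 0&\text{otherwise.}\end{cases}$$ In particular, for every $v\in W$, $\mu(e,v)=(-1)^{|S(v)|}$ if $W_{S(v)}$ is finite and $v=w_0(S(v))$, and $\mu(e,v)=0$ otherwise.
   Context: $(W,S)$ is a finitely generated Coxeter system with length function $\ell$ and identity $e$. For $w\in W$, $S(w)\subseteq S$ is the set of simple reflections appearing in a (any) reduced expression of $w$; $\mathrm{Des}(w)=\{s\in S:\ell(ws)<\ell(w)\}$. For $I\subseteq S$, $W_I$ is the parabolic subgroup generated by $I$, $X_I=\{u\in W:\ell(us)>\ell(u)\ \forall s\in I\}$, and every $w\in W$ factors uniquely as $w=w^Iw_I$ with $w^I\in X_I$, $w_I\in W_I$ (parabolic components along $I$). The partial order on $W$: $u\le v$ if and only if $v_{S(u)}=u$. For $K\subseteq S$ with $W_K$ finite, $w_0(K)$ denotes the unique element of maximal length in $W_K$. *)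

theory Defs
  imports "HOL-Algebra.Group"
begin

definition wprod :: "'a monoid \<Rightarrow> 'a list \<Rightarrow> 'a" where
  "wprod G xs = foldr (\<lambda>x y. x \<otimes>\<^bsub>G\<^esub> y) xs \<one>\<^bsub>G\<^esub>"

definition clen :: "'a monoid \<Rightarrow> 'a set \<Rightarrow> 'a \<Rightarrow> nat" where
  "clen G S w = (LEAST n. \<exists>xs. set xs \<subseteq> S \<and> length xs = n \<and> wprod G xs = w)"

definition reduced_word :: "'a monoid \<Rightarrow> 'a set \<Rightarrow> 'a \<Rightarrow> 'a list \<Rightarrow> bool" where
  "reduced_word G S w xs \<longleftrightarrow> set xs \<subseteq> S \<and> wprod G xs = w \<and> length xs = clen G S w"

text \<open>(G,S) is a Coxeter system: G is a group generated by the involutions in S and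
  the exchange property holds (Bjoerner--Brenti, Thm. 1.5.1).\<close>
definition coxeter_system :: "'a monoid \<Rightarrow> 'a set \<Rightarrow> bool" where
  "coxeter_system G S \<longleftrightarrow>
     group G \<and> S \<subseteq> carrier G \<and>
     (\<forall>s\<in>S. s \<noteq> \<one>\<^bsub>G\<^esub> \<and> s \<otimes>\<^bsub>G\<^esub> s = \<one>\<^bsub>G\<^esub>) \<and>
     carrier G = {wprod G xs | xs. set xs \<subseteq> S} \<and>
     (\<forall>s\<in>S. \<forall>xs. set xs \<subseteq> S \<and> length xs = clen G S (wprod G xs) \<and>
         clen G S (s \<otimes>\<^bsub>G\<^esub> wprod G xs) \<le> length xs \<longrightarrow>
         (\<exists>i<length xs. s \<otimes>\<^bsub>G\<^esub> wprod G xs = wprod G (take i xs @ drop (Suc i) xs)))"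

definition supp :: "'a monoid \<Rightarrow> 'a set \<Rightarrow> 'a \<Rightarrow> 'a set" where
  "supp G S w = {s. \<exists>xs. reduced_word G S w xs \<and> s \<in> set xs}"

definition descents :: "'a monoid \<Rightarrow> 'a set \<Rightarrow> 'a \<Rightarrow> 'a set" where
  "descents G S w = {s\<in>S. clen G S (w \<otimes>\<^bsub>G\<^esub> s) < clen G S w}"

definition parabolic :: "'a monoid \<Rightarrow> 'a set \<Rightarrow> 'a set" where
  "parabolic G I = {wprod G xs | xs. set xs \<subseteq> I}"

definition minreps :: "'a monoid \<Rightarrow> 'a set \<Rightarrow> 'a set \<Rightarrow> 'a set" where
  "minreps G S I = {u\<in>carrier G. \<forall>s\<in>I. clen G S (u \<otimes>\<^bsub>G\<^esub> s) > clen G S u}"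

definition par_quot :: "'a monoid \<Rightarrow> 'a set \<Rightarrow> 'a set \<Rightarrow> 'a \<Rightarrow> 'a" where
  "par_quot G S I w = (THE u. u \<in> minreps G S I \<and> (\<exists>x\<in>parabolic G I. w = u \<otimes>\<^bsub>G\<^esub> x))"

definition par_comp :: "'a monoid \<Rightarrow> 'a set \<Rightarrow> 'a set \<Rightarrow> 'a \<Rightarrow> 'a" where
  "par_comp G S I w = (THE x. x \<in> parabolic G I \<and> w = par_quot G S I w \<otimes>\<^bsub>G\<^esub> x)"

definition cox_le :: "'a monoid \<Rightarrow> 'a set \<Rightarrow> 'a \<Rightarrow> 'a \<Rightarrow> bool" where
  "cox_le G S u v \<longleftrightarrow> u \<in> carrier G \<and> v \<in> carrier G \<and> par_comp G S (supp G S u) v = u"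

definition longest :: "'a monoid \<Rightarrow> 'a set \<Rightarrow> 'a set \<Rightarrow> 'a" where
  "longest G S K = (THE w. w \<in> parabolic G K \<and> (\<forall>x\<in>parabolic G K. clen G S x \<le> clen G S w))"

definition is_mobius :: "('a \<Rightarrow> 'a \<Rightarrow> bool) \<Rightarrow> 'a set \<Rightarrow> ('a \<Rightarrow> 'a \<Rightarrow> int) \<Rightarrow> bool" where
  "is_mobius rel A f \<longleftrightarrow>
     (\<forall>u v. f u v = (if u \<in> A \<and> v \<in> A \<and> rel u v then
                       (if u = v then 1 else - (\<Sum>z\<in>{z\<in>A. rel u z \<and> rel z v \<and> z \<noteq> v}. f u z))
                     else 0))"

definition mobius :: "('a \<Rightarrow> 'a \<Rightarrow> bool) \<Rightarrow> 'a set \<Rightarrow> 'a \<Rightarrow> 'a \<Rightarrow> int" where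
  "mobius rel A = (THE f. is_mobius rel A f)"

end

theory Submission imports Defs begin

locale coxl = group G for G (structure) +
  fixes S :: "'a set"
  assumes S_sub: "S \<subseteq> carrier G"
    and S_inv: "\<And>s. s \<in> S \<Longrightarrow> s \<noteq> \<one> \<and> s \<otimes> s = \<one>"
    and gen: "carrier G = {wprod G xs | xs. set xs \<subseteq> S}"
    and exch: "\<And>s xs. s \<in> S \<Longrightarrow> set xs \<subseteq> S \<Longrightarrow> length xs = clen G S (wprod G xs) \<Longrightarrow>
         clen G S (s \<otimes> wprod G xs) \<le> length xs \<Longrightarrow>
         (\<exists>i<length xs. s \<otimes> wprod G xs = wprod G (take i xs @ drop (Suc i) xs))"
    and finS: "finite S"
begin

abbreviation len where "len \<equiv> clen G S"
abbreviation WP where "WP J \<equiv> parabolic G J"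

lemma wprod_Nil[simp]: "wprod G [] = \<one>" by (simp add: wprod_def)
lemma wprod_Cons[simp]: "wprod G (x#xs) = x \<otimes> wprod G xs" by (simp add: wprod_def)

lemma wprod_closed[simp]: "set xs \<subseteq> S \<Longrightarrow> wprod G xs \<in> carrier G"
  by (induct xs) (use S_sub in auto)

lemma wprod_append: "set xs \<subseteq> S \<Longrightarrow> set ys \<subseteq> S \<Longrightarrow> wprod G (xs @ ys) = wprod G xs \<otimes> wprod G ys"
  by (induct xs) (use S_sub in \<open>auto simp: m_assoc\<close>)

lemma S_carr: "s \<in> S \<Longrightarrow> s \<in> carrier G" using S_sub by auto

lemma S_inv_eq: "s \<in> S \<Longrightarrow> inv s = s"
  using S_inv[of s] S_carr[of s] by (metis inv_equality)

lemma wprod_rev: "set xs \<subseteq> S \<Longrightarrow> inv (wprod G xs) = wprod G (rev xs)"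
proof (induct xs)
  case (Cons x xs)
  then have "inv (wprod G (x#xs)) = inv (wprod G xs) \<otimes> inv x"
    using S_carr by (simp add: inv_mult_group)
  also have "\<dots> = wprod G (rev xs) \<otimes> wprod G [x]" using Cons S_carr S_inv_eq by simp
  also have "\<dots> = wprod G (rev (x#xs))" using Cons by (simp add: wprod_append)
  finally show ?case .
qed simp

lemma carrier_word: "w \<in> carrier G \<Longrightarrow> \<exists>xs. set xs \<subseteq> S \<and> wprod G xs = w"
  using gen by auto

lemma clen_le: "set xs \<subseteq> S \<Longrightarrow> len (wprod G xs) \<le> length xs"
  unfolding clen_def by (rule Least_le) auto

lemma red_ex: "w \<in> carrier G \<Longrightarrow> \<exists>xs. set xs \<subseteq> S \<and> length xs = len w \<and> wprod G xs = w"
proof -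
  assume "w \<in> carrier G"
  then obtain xs where "set xs \<subseteq> S" "wprod G xs = w" using carrier_word by blast
  then have "\<exists>n xs. set xs \<subseteq> S \<and> length xs = n \<and> wprod G xs = w" by blast
  then show ?thesis unfolding clen_def by (rule LeastI_ex)
qed

lemma clen_one[simp]: "len \<one> = 0"
proof -
  have "len (wprod G []) \<le> length ([]::'a list)" by (rule clen_le) simp
  then show ?thesis by simp
qed

lemma clen_zero: "w \<in> carrier G \<Longrightarrow> len w = 0 \<Longrightarrow> w = \<one>"
proof -
  assume "w \<in> carrier G" "len w = 0"
  then obtain xs where "length xs = 0" "wprod G xs = w" using red_ex by metis
  then show ?thesis by simp
qed

lemma clen_inv_le: "w \<in> carrier G \<Longrightarrow> len (inv w) \<le> len w"
proof -
  assume "w \<in> carrier G"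
  then obtain xs where xs: "set xs \<subseteq> S" "length xs = len w" "wprod G xs = w" using red_ex by blast
  have "inv w = wprod G (rev xs)" using wprod_rev[OF xs(1)] xs(3) by simp
  moreover have "len (wprod G (rev xs)) \<le> length (rev xs)" by (rule clen_le) (use xs(1) in simp)
  ultimately show ?thesis using xs(2) by simp
qed

lemma clen_inv: "w \<in> carrier G \<Longrightarrow> len (inv w) = len w"
proof -
  assume w: "w \<in> carrier G"
  have "len (inv (inv w)) \<le> len (inv w)" by (rule clen_inv_le) (use w in simp)
  then have "len w \<le> len (inv w)" using w by simp
  then show ?thesis using clen_inv_le[OF w] by simp
qed

lemma clen_mult: "a \<in> carrier G \<Longrightarrow> b \<in> carrier G \<Longrightarrow> len (a \<otimes> b) \<le> len a + len b"
proof -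
  assume "a \<in> carrier G" "b \<in> carrier G"
  then obtain xs ys where "set xs \<subseteq> S" "length xs = len a" "wprod G xs = a"
     "set ys \<subseteq> S" "length ys = len b" "wprod G ys = b" using red_ex by metis
  then show ?thesis using clen_le[of "xs@ys"] wprod_append by auto
qed

lemma clen_S: "s \<in> S \<Longrightarrow> len s = 1"
proof -
  assume s: "s \<in> S"
  have "len s \<le> 1" using clen_le[of "[s]"] s S_carr by simp
  moreover have "len s \<noteq> 0" using clen_zero[of s] S_inv[OF s] S_carr[OF s] by auto
  ultimately show ?thesis by simp
qed

lemma exch_left: "s \<in> S \<Longrightarrow> set xs \<subseteq> S \<Longrightarrow> length xs = len (wprod G xs) \<Longrightarrow>
         len (s \<otimes> wprod G xs) \<le> length xs \<Longrightarrow>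
         (\<exists>i<length xs. s \<otimes> wprod G xs = wprod G (take i xs @ drop (Suc i) xs))"
  using exch by blast

lemma del_sub: "set (take i xs @ drop (Suc i) xs) \<subseteq> set xs"
  using set_take_subset[of i xs] set_drop_subset[of "Suc i" xs] by auto

lemma del_len: "i < length xs \<Longrightarrow> length (take i xs @ drop (Suc i) xs) = length xs - 1"
  by simp

lemma clen_left: "s \<in> S \<Longrightarrow> w \<in> carrier G \<Longrightarrow> len (s \<otimes> w) = len w + 1 \<or> len (s \<otimes> w) + 1 = len w"
proof -
  assume s: "s \<in> S" and w: "w \<in> carrier G"
  have sc: "s \<in> carrier G" using s S_carr by auto
  have u: "len (s \<otimes> w) \<le> len w + 1" using clen_mult[OF sc w] clen_S[OF s] by simp
  have "w = s \<otimes> (s \<otimes> w)" using S_inv[OF s] sc w by (simp add: m_assoc[symmetric])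
  then have l: "len w \<le> len (s \<otimes> w) + 1" using clen_mult[OF sc, of "s \<otimes> w"] clen_S[OF s] sc w by simp
  obtain xs where xs: "set xs \<subseteq> S" "length xs = len w" "wprod G xs = w" using red_ex w by blast
  have "len (s \<otimes> w) < len w" if "len (s \<otimes> w) \<le> len w"
  proof -
    have "len (s \<otimes> wprod G xs) \<le> length xs" using that xs by simp
    from exch_left[OF s xs(1) _ this] xs obtain i where "i < length xs" "s \<otimes> w = wprod G (take i xs @ drop (Suc i) xs)"
      by auto
    moreover have "set (take i xs @ drop (Suc i) xs) \<subseteq> S" using del_sub[of i xs] xs by blast
    ultimately have "len (s \<otimes> w) \<le> length xs - 1" using clen_le[of "take i xs @ drop (Suc i) xs"] by simp
    then show ?thesis using \<open>i < length xs\<close> xs by linarith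
  qed
  then show ?thesis using u l by linarith
qed


lemma rev_del: "i < length xs \<Longrightarrow> rev (take i (rev xs) @ drop (Suc i) (rev xs)) =
   take (length xs - Suc i) xs @ drop (Suc (length xs - Suc i)) xs"
  by (simp add: take_rev drop_rev Suc_diff_Suc)

lemma clen_right: "s \<in> S \<Longrightarrow> w \<in> carrier G \<Longrightarrow> len (w \<otimes> s) = len w + 1 \<or> len (w \<otimes> s) + 1 = len w"
proof -
  assume s: "s \<in> S" and w: "w \<in> carrier G"
  have sc: "s \<in> carrier G" using S_carr[OF s] .
  have "inv (w \<otimes> s) = s \<otimes> inv w" using sc w S_inv_eq[OF s] by (simp add: inv_mult_group)
  then have "len (w \<otimes> s) = len (s \<otimes> inv w)" using clen_inv[of "w \<otimes> s"] sc w by simp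
  moreover have "len (inv w) = len w" using clen_inv[OF w] .
  ultimately show ?thesis using clen_left[OF s, of "inv w"] w by simp
qed

lemma exch_right: "s \<in> S \<Longrightarrow> set xs \<subseteq> S \<Longrightarrow> length xs = len (wprod G xs) \<Longrightarrow>
         len (wprod G xs \<otimes> s) \<le> length xs \<Longrightarrow>
         (\<exists>i<length xs. wprod G xs \<otimes> s = wprod G (take i xs @ drop (Suc i) xs))"
proof -
  assume s: "s \<in> S" and xs: "set xs \<subseteq> S" and r: "length xs = len (wprod G xs)"
    and le: "len (wprod G xs \<otimes> s) \<le> length xs"
  define w where "w = wprod G xs"
  have w: "w \<in> carrier G" using xs w_def by simp
  have sc: "s \<in> carrier G" using S_carr[OF s] .
  have rs: "set (rev xs) \<subseteq> S" using xs by simp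
  have iw: "wprod G (rev xs) = inv w" using wprod_rev[OF xs] w_def by simp
  have r2: "length (rev xs) = len (wprod G (rev xs))" using iw clen_inv[OF w] r w_def by simp
  have eq: "inv (w \<otimes> s) = s \<otimes> inv w" using sc w S_inv_eq[OF s] by (simp add: inv_mult_group)
  then have "len (s \<otimes> wprod G (rev xs)) = len (w \<otimes> s)" using iw clen_inv[of "w \<otimes> s"] sc w by simp
  then have "len (s \<otimes> wprod G (rev xs)) \<le> length (rev xs)" using le w_def by simp
  from exch_left[OF s rs r2 this] obtain i where i: "i < length (rev xs)"
    "s \<otimes> wprod G (rev xs) = wprod G (take i (rev xs) @ drop (Suc i) (rev xs))" by blast
  define D where "D = take i (rev xs) @ drop (Suc i) (rev xs)"
  have Ds: "set D \<subseteq> S" using del_sub[of i "rev xs"] rs D_def by blast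
  have "w \<otimes> s = inv (s \<otimes> inv w)" using eq sc w by (metis inv_inv m_closed)
  also have "\<dots> = inv (wprod G D)" using i(2) iw D_def by simp
  also have "\<dots> = wprod G (rev D)" using wprod_rev[OF Ds] .
  also have "rev D = take (length xs - Suc i) xs @ drop (Suc (length xs - Suc i)) xs"
    using rev_del[of i xs] i(1) D_def by simp
  finally show ?thesis using i(1) w_def by (intro exI[of _ "length xs - Suc i"]) auto
qed

lemma red_sub: "set xs \<subseteq> S \<Longrightarrow> \<exists>ys. set ys \<subseteq> set xs \<and> wprod G ys = wprod G xs \<and> length ys = len (wprod G xs)"
proof (induct xs)
  case Nil
  then show ?case by simp
next
  case (Cons x xs)
  then have x: "x \<in> S" and xs: "set xs \<subseteq> S" by auto
  from Cons(1)[OF xs] obtain ys where ys: "set ys \<subseteq> set xs" "wprod G ys = wprod G xs" "length ys = len (wprod G xs)"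
    by blast
  have ysS: "set ys \<subseteq> S" using ys(1) xs by blast
  have w': "wprod G xs \<in> carrier G" using xs by simp
  show ?case
  proof (cases "len (x \<otimes> wprod G xs) = len (wprod G xs) + 1")
    case True
    then show ?thesis using ys by (intro exI[of _ "x#ys"]) auto
  next
    case False
    then have lt: "len (x \<otimes> wprod G xs) + 1 = len (wprod G xs)" using clen_left[OF x w'] by simp
    have "len (x \<otimes> wprod G ys) \<le> length ys" using lt ys by simp
    from exch_left[OF x ysS _ this] ys obtain i where i: "i < length ys"
      "x \<otimes> wprod G ys = wprod G (take i ys @ drop (Suc i) ys)" by auto
    show ?thesis
      apply (rule exI[of _ "take i ys @ drop (Suc i) ys"])
      using i del_sub[of i ys] ys lt by auto
  qed
qed

lemma WP_carr: "J \<subseteq> S \<Longrightarrow> WP J \<subseteq> carrier G"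
  unfolding parabolic_def by auto

lemma one_WP[simp]: "\<one> \<in> WP J"
  unfolding parabolic_def by (auto intro!: exI[of _ "[]"])

lemma WP_mult: "J \<subseteq> S \<Longrightarrow> a \<in> WP J \<Longrightarrow> b \<in> WP J \<Longrightarrow> a \<otimes> b \<in> WP J"
proof -
  assume J: "J \<subseteq> S" and "a \<in> WP J" "b \<in> WP J"
  then obtain xs ys where "set xs \<subseteq> J" "a = wprod G xs" "set ys \<subseteq> J" "b = wprod G ys"
    unfolding parabolic_def by blast
  then have "a \<otimes> b = wprod G (xs @ ys)" "set (xs@ys) \<subseteq> J" using J wprod_append by auto
  then show ?thesis unfolding parabolic_def by blast
qed

lemma WP_inv: "J \<subseteq> S \<Longrightarrow> a \<in> WP J \<Longrightarrow> inv a \<in> WP J"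
proof -
  assume J: "J \<subseteq> S" and "a \<in> WP J"
  then obtain xs where "set xs \<subseteq> J" "a = wprod G xs"
    unfolding parabolic_def by blast
  then have "inv a = wprod G (rev xs)" "set (rev xs) \<subseteq> J" using J wprod_rev by auto
  then show ?thesis unfolding parabolic_def by blast
qed

lemma WP_gen: "s \<in> J \<Longrightarrow> J \<subseteq> S \<Longrightarrow> s \<in> WP J"
proof -
  assume "s \<in> J" "J \<subseteq> S"
  then have "s = wprod G [s]" "set [s] \<subseteq> J" using S_carr by auto
  then show ?thesis unfolding parabolic_def by blast
qed

lemma WP_mono: "J \<subseteq> K \<Longrightarrow> WP J \<subseteq> WP K"
  unfolding parabolic_def by blast

lemma WP_red: "J \<subseteq> S \<Longrightarrow> w \<in> WP J \<Longrightarrow> \<exists>ys. set ys \<subseteq> J \<and> wprod G ys = w \<and> length ys = len w"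
proof -
  assume J: "J \<subseteq> S" and "w \<in> WP J"
  then obtain xs where xs: "set xs \<subseteq> J" "w = wprod G xs" unfolding parabolic_def by blast
  then show ?thesis using red_sub[of xs] J by (metis subset_trans)
qed

lemma WP_S: "J \<subseteq> S \<Longrightarrow> s \<in> S \<Longrightarrow> s \<in> WP J \<Longrightarrow> s \<in> J"
proof -
  assume J: "J \<subseteq> S" and s: "s \<in> S" and "s \<in> WP J"
  then obtain ys where ys: "set ys \<subseteq> J" "wprod G ys = s" "length ys = len s" using WP_red by blast
  then have "length ys = 1" using clen_S[OF s] by simp
  then obtain t where "ys = [t]" by (metis One_nat_def length_0_conv length_Suc_conv)
  then show ?thesis using ys S_carr J by auto
qed

lemma red_in: "J \<subseteq> S \<Longrightarrow> set xs \<subseteq> S \<Longrightarrow> length xs = len (wprod G xs) \<Longrightarrow> wprod G xs \<in> WP J \<Longrightarrow> set xs \<subseteq> J"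
proof (induct xs)
  case Nil
  then show ?case by simp
next
  case (Cons s ss)
  have J: "J \<subseteq> S" by fact
  have s: "s \<in> S" and ssS: "set ss \<subseteq> S" using Cons by auto
  have sc: "s \<in> carrier G" using S_carr[OF s] .
  define w' where "w' = wprod G ss"
  have w'c: "w' \<in> carrier G" using ssS w'_def by simp
  have w: "wprod G (s#ss) = s \<otimes> w'" using w'_def by simp
  have l1: "len w' \<le> length ss" using clen_le[OF ssS] w'_def by simp
  have "len (s \<otimes> w') \<le> len s + len w'" using clen_mult[OF sc w'c] .
  then have l2: "length ss + 1 \<le> 1 + len w'" using Cons(4) w clen_S[OF s] by simp
  have red': "length ss = len (wprod G ss)" using l1 l2 w'_def by simp
  have ssw: "s \<otimes> (s \<otimes> w') = w'" using S_inv[OF s] sc w'c by (simp add: m_assoc[symmetric])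
  obtain ts where ts: "set ts \<subseteq> J" "wprod G ts = s \<otimes> w'" "length ts = len (s \<otimes> w')"
    using WP_red[OF J] Cons(5) w by metis
  have tsS: "set ts \<subseteq> S" using ts J by blast
  have "len (s \<otimes> wprod G ts) \<le> length ts" using ts ssw red' w'_def Cons(4) w by simp
  from exch_left[OF s tsS _ this] ts obtain i where i: "i < length ts"
    "s \<otimes> wprod G ts = wprod G (take i ts @ drop (Suc i) ts)" by auto
  have "w' = wprod G (take i ts @ drop (Suc i) ts)" using i(2) ts(2) ssw by simp
  moreover have "set (take i ts @ drop (Suc i) ts) \<subseteq> J" using del_sub[of i ts] ts(1) by blast
  ultimately have "w' \<in> WP J" unfolding parabolic_def by blast
  then have ssJ: "set ss \<subseteq> J" using Cons(1)[OF J ssS red'] w'_def by simp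
  have "s = (s \<otimes> w') \<otimes> inv w'" using sc w'c by (simp add: m_assoc)
  moreover have "s \<otimes> w' \<in> WP J" using Cons(5) w by simp
  moreover have "inv w' \<in> WP J" using WP_inv[OF J \<open>w' \<in> WP J\<close>] .
  ultimately have "s \<in> WP J" using WP_mult[OF J] by metis
  then have "s \<in> J" using WP_S[OF J s] by simp
  then show ?case using ssJ by simp
qed


abbreviation sp where "sp \<equiv> supp G S"
abbreviation Des where "Des \<equiv> descents G S"
abbreviation Xr where "Xr J \<equiv> minreps G S J"
abbreviation pq where "pq J \<equiv> par_quot G S J"
abbreviation pc where "pc J \<equiv> par_comp G S J"

lemma supp_red: "set xs \<subseteq> S \<Longrightarrow> length xs = len (wprod G xs) \<Longrightarrow> sp (wprod G xs) = set xs"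
proof
  assume xs: "set xs \<subseteq> S" and r: "length xs = len (wprod G xs)"
  show "set xs \<subseteq> sp (wprod G xs)" using xs r unfolding supp_def reduced_word_def by auto
  show "sp (wprod G xs) \<subseteq> set xs"
  proof
    fix s assume "s \<in> sp (wprod G xs)"
    then obtain ys where ys: "set ys \<subseteq> S" "wprod G ys = wprod G xs" "length ys = len (wprod G xs)" "s \<in> set ys"
      unfolding supp_def reduced_word_def by blast
    have "wprod G ys \<in> WP (set xs)" using ys(2) unfolding parabolic_def by blast
    then have "set ys \<subseteq> set xs" using red_in[of "set xs" ys] xs ys by simp
    then show "s \<in> set xs" using ys(4) by blast
  qed
qed

lemma supp_ex: "w \<in> carrier G \<Longrightarrow> \<exists>xs. set xs \<subseteq> S \<and> length xs = len w \<and> wprod G xs = w \<and> sp w = set xs"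
  using red_ex supp_red by metis

lemma supp_S: "w \<in> carrier G \<Longrightarrow> sp w \<subseteq> S"
  using supp_ex by metis

lemma supp_fin: "finite (sp w)"
  unfolding supp_def reduced_word_def using finS by (rule rev_finite_subset) blast

lemma WP_supp: "w \<in> carrier G \<Longrightarrow> w \<in> WP (sp w)"
  using supp_ex unfolding parabolic_def by blast

lemma WP_iff: "J \<subseteq> S \<Longrightarrow> w \<in> carrier G \<Longrightarrow> w \<in> WP J \<longleftrightarrow> sp w \<subseteq> J"
proof
  assume J: "J \<subseteq> S" and w: "w \<in> carrier G"
  obtain xs where xs: "set xs \<subseteq> S" "length xs = len w" "wprod G xs = w" "sp w = set xs" using supp_ex[OF w] by blast
  { assume "w \<in> WP J" then show "sp w \<subseteq> J" using red_in[OF J xs(1)] xs by simp }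
  { assume "sp w \<subseteq> J" then show "w \<in> WP J" using WP_mono WP_supp[OF w] by blast }
qed

lemma supp_one[simp]: "sp \<one> = {}"
  using supp_red[of "[]"] by simp

lemma supp_add: "a \<in> carrier G \<Longrightarrow> b \<in> carrier G \<Longrightarrow> len (a \<otimes> b) = len a + len b \<Longrightarrow> sp (a \<otimes> b) = sp a \<union> sp b"
proof -
  assume a: "a \<in> carrier G" and b: "b \<in> carrier G" and l: "len (a \<otimes> b) = len a + len b"
  obtain xs where xs: "set xs \<subseteq> S" "length xs = len a" "wprod G xs = a" "sp a = set xs" using supp_ex[OF a] by blast
  obtain ys where ys: "set ys \<subseteq> S" "length ys = len b" "wprod G ys = b" "sp b = set ys" using supp_ex[OF b] by blast
  have "wprod G (xs @ ys) = a \<otimes> b" using wprod_append xs ys by simp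
  moreover have "set (xs@ys) \<subseteq> S" using xs ys by simp
  moreover have "length (xs @ ys) = len (a \<otimes> b)" using l xs ys by simp
  ultimately have "sp (a \<otimes> b) = set (xs @ ys)" using supp_red by metis
  then show ?thesis using xs ys by simp
qed

lemma Des_supp: "w \<in> carrier G \<Longrightarrow> s \<in> Des w \<Longrightarrow> s \<in> sp w"
proof -
  assume w: "w \<in> carrier G" and "s \<in> Des w"
  then have s: "s \<in> S" and lt: "len (w \<otimes> s) < len w" unfolding descents_def by auto
  obtain xs where xs: "set xs \<subseteq> S" "length xs = len w" "wprod G xs = w" "sp w = set xs" using supp_ex[OF w] by blast
  from exch_right[OF s xs(1)] xs lt obtain i where i: "i < length xs" "w \<otimes> s = wprod G (take i xs @ drop (Suc i) xs)"
    by force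
  have J: "sp w \<subseteq> S" using xs by simp
  have "wprod G (take i xs @ drop (Suc i) xs) \<in> WP (sp w)"
    using del_sub[of i xs] xs(4) unfolding parabolic_def by blast
  then have "w \<otimes> s \<in> WP (sp w)" using i by simp
  moreover have "inv w \<in> WP (sp w)" using WP_inv[OF J WP_supp[OF w]] .
  ultimately have "inv w \<otimes> (w \<otimes> s) \<in> WP (sp w)" using WP_mult[OF J] by blast
  then have "s \<in> WP (sp w)" using w S_carr[OF s] by (simp add: m_assoc[symmetric])
  then show ?thesis using WP_S[OF J s] by blast
qed

lemma del_append: "take i (us@xs) @ drop (Suc i) (us@xs) = (if i < length us then (take i us @ drop (Suc i) us) @ xs
    else us @ (take (i - length us) xs @ drop (Suc (i - length us)) xs))"
  by (cases "i < length us") (auto simp: Suc_diff_le)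

lemma coset_min: "\<exists>x\<in>WP J. \<forall>y\<in>WP J. len (w \<otimes> x) \<le> len (w \<otimes> y)"
proof -
  have "\<exists>x. x \<in> WP J \<and> (\<forall>y. y \<in> WP J \<longrightarrow> len (w \<otimes> x) \<le> len (w \<otimes> y))"
    by (rule ex_has_least_nat[of "\<lambda>x. x \<in> WP J" \<one>]) simp
  then show ?thesis by blast
qed

lemma min_add: "J \<subseteq> S \<Longrightarrow> u \<in> carrier G \<Longrightarrow> (\<forall>y\<in>WP J. len u \<le> len (u \<otimes> y)) \<Longrightarrow> x \<in> WP J \<Longrightarrow>
   len (u \<otimes> x) = len u + len x"
proof -
  assume J: "J \<subseteq> S" and u: "u \<in> carrier G" and mn: "\<forall>y\<in>WP J. len u \<le> len (u \<otimes> y)"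
  obtain us where us: "set us \<subseteq> S" "length us = len u" "wprod G us = u" using red_ex[OF u] by blast
  have "\<forall>x\<in>WP J. len x = n \<longrightarrow> len (u \<otimes> x) = len u + len x" for n
  proof (induct n)
    case 0
    show ?case
    proof (intro ballI impI)
      fix x assume "x \<in> WP J" "len x = 0"
      then have "x = \<one>" using clen_zero WP_carr[OF J] by blast
      then show "len (u \<otimes> x) = len u + len x" using u by simp
    qed
  next
    case (Suc n)
    show ?case
    proof (intro ballI impI)
      fix x assume x: "x \<in> WP J" and lx: "len x = Suc n"
      have xc: "x \<in> carrier G" using x WP_carr[OF J] by blast
      obtain xs where xs: "set xs \<subseteq> J" "wprod G xs = x" "length xs = len x" using WP_red[OF J x] by blast
      then obtain xs' s where xs': "xs = xs' @ [s]" using lx by (metis length_0_conv nat.distinct(1) rev_exhaust)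
      have s: "s \<in> J" "s \<in> S" using xs xs' J by auto
      have sc: "s \<in> carrier G" using S_carr[OF s(2)] .
      have xs'S: "set xs' \<subseteq> S" "set xs' \<subseteq> J" using xs xs' J by auto
      define x' where "x' = wprod G xs'"
      have x'c: "x' \<in> carrier G" using xs'S x'_def by simp
      have x'J: "x' \<in> WP J" using xs'S(2) x'_def unfolding parabolic_def by blast
      have xx: "x = x' \<otimes> s" using xs xs' x'_def xs'S sc s(2) wprod_append[of xs' "[s]"] by simp
      have l1: "len x' \<le> n" using clen_le[OF xs'S(1)] x'_def xs xs' lx by simp
      have "len x \<le> len x' + 1" using xx clen_mult[OF x'c sc] clen_S[OF s(2)] by simp
      then have lx': "len x' = n" using l1 lx by simp
      have IH: "len (u \<otimes> x') = len u + n" using Suc x'J lx' by simp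
      have ux'c: "u \<otimes> x' \<in> carrier G" using u x'c by simp
      show "len (u \<otimes> x) = len u + len x"
      proof (cases "len (u \<otimes> x' \<otimes> s) = len (u \<otimes> x') + 1")
        case True
        then show ?thesis using IH lx xx u x'c sc by (simp add: m_assoc)
      next
        case False
        then have dn: "len (u \<otimes> x' \<otimes> s) + 1 = len (u \<otimes> x')" using clen_right[OF s(2) ux'c] by simp
        define zs where "zs = us @ xs'"
        have zsS: "set zs \<subseteq> S" using us xs'S zs_def by simp
        have wz: "wprod G zs = u \<otimes> x'" using zs_def wprod_append us xs'S x'_def by simp
        have lz: "length zs = len (wprod G zs)" using wz IH us zs_def xs' xs lx by simp
        have "len (wprod G zs \<otimes> s) \<le> length zs" using wz dn lz by simp
        from exch_right[OF s(2) zsS lz this] obtain i where i: "i < length zs"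
          "wprod G zs \<otimes> s = wprod G (take i zs @ drop (Suc i) zs)" by blast
        show ?thesis
        proof (cases "i < length us")
          case True
          define u1 where "u1 = wprod G (take i us @ drop (Suc i) us)"
          have u1S: "set (take i us @ drop (Suc i) us) \<subseteq> S" using del_sub[of i us] us by blast
          have u1c: "u1 \<in> carrier G" using u1S u1_def by simp
          have "take i zs @ drop (Suc i) zs = (take i us @ drop (Suc i) us) @ xs'"
            using del_append[of i us xs'] True zs_def by simp
          then have "wprod G zs \<otimes> s = u1 \<otimes> x'"
            using i(2) u1_def x'_def wprod_append[OF u1S xs'S(1)] by simp
          then have e: "u \<otimes> x' \<otimes> s = u1 \<otimes> x'" using wz by simp
          define y where "y = x' \<otimes> s \<otimes> inv x'"
          have yJ: "y \<in> WP J" using y_def WP_mult[OF J] WP_inv[OF J x'J] x'J WP_gen[OF s(1) J] by blast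
          have "u \<otimes> y = u \<otimes> x' \<otimes> s \<otimes> inv x'" using y_def u x'c sc by (simp add: m_assoc)
          also have "\<dots> = u1" using e u1c x'c by (simp add: m_assoc)
          finally have "len u \<le> len u1" using mn yJ by metis
          moreover have "len u1 \<le> length us - 1" using clen_le[OF u1S] u1_def True by simp
          ultimately show ?thesis using True us by simp
        next
          case False
          define x2 where "x2 = wprod G (take (i - length us) xs' @ drop (Suc (i - length us)) xs')"
          have x2S: "set (take (i - length us) xs' @ drop (Suc (i - length us)) xs') \<subseteq> S"
            using del_sub[of "i - length us" xs'] xs'S by blast
          have x2c: "x2 \<in> carrier G" using x2S x2_def by simp
          have "take i zs @ drop (Suc i) zs = us @ (take (i - length us) xs' @ drop (Suc (i - length us)) xs')"
            using del_append[of i us xs'] False zs_def by simp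
          then have "wprod G zs \<otimes> s = u \<otimes> x2"
            using i(2) x2_def wprod_append[OF us(1) x2S] us by simp
          then have "u \<otimes> (x' \<otimes> s) = u \<otimes> x2" using wz u x'c sc by (simp add: m_assoc)
          then have "x = x2" using xx u x'c sc x2c by (simp add: Units_eq)
          moreover have "len x2 \<le> length xs' - 1" using clen_le[OF x2S] x2_def i False zs_def by simp
          ultimately show ?thesis using lx xs xs' by simp
        qed
      qed
    qed
  qed
  then show "x \<in> WP J \<Longrightarrow> len (u \<otimes> x) = len u + len x" by blast
qed


lemma Xr_carr: "u \<in> Xr J \<Longrightarrow> u \<in> carrier G"
  unfolding minreps_def by simp

lemma min_rep: "J \<subseteq> S \<Longrightarrow> u \<in> carrier G \<Longrightarrow> (\<forall>y\<in>WP J. len u \<le> len (u \<otimes> y)) \<Longrightarrow> u \<in> Xr J"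
proof -
  assume J: "J \<subseteq> S" and u: "u \<in> carrier G" and mn: "\<forall>y\<in>WP J. len u \<le> len (u \<otimes> y)"
  have "len u < len (u \<otimes> s)" if s: "s \<in> J" for s
  proof -
    have "len u \<le> len (u \<otimes> s)" using mn WP_gen[OF s J] by blast
    then show ?thesis using clen_right[of s u] s J u by auto
  qed
  then show ?thesis unfolding minreps_def using u by blast
qed

lemma rep_add: "J \<subseteq> S \<Longrightarrow> u \<in> Xr J \<Longrightarrow> x \<in> WP J \<Longrightarrow> len (u \<otimes> x) = len u + len x"
proof -
  assume J: "J \<subseteq> S" and uX: "u \<in> Xr J" and x: "x \<in> WP J"
  have u: "u \<in> carrier G" using uX Xr_carr by blast
  obtain x0 where x0: "x0 \<in> WP J" "\<forall>y\<in>WP J. len (u \<otimes> x0) \<le> len (u \<otimes> y)" using coset_min by blast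
  have x0c: "x0 \<in> carrier G" using x0 WP_carr[OF J] by blast
  define u' where "u' = u \<otimes> x0"
  have u'c: "u' \<in> carrier G" using u x0c u'_def by simp
  have mn: "\<forall>y\<in>WP J. len u' \<le> len (u' \<otimes> y)"
  proof
    fix y assume y: "y \<in> WP J"
    then have "x0 \<otimes> y \<in> WP J" using WP_mult[OF J x0(1)] by blast
    moreover have "u' \<otimes> y = u \<otimes> (x0 \<otimes> y)" using u'_def u x0c y WP_carr[OF J] by (auto simp: m_assoc)
    ultimately show "len u' \<le> len (u' \<otimes> y)" using x0(2) u'_def by metis
  qed
  define z where "z = inv x0"
  have zJ: "z \<in> WP J" using WP_inv[OF J x0(1)] z_def by simp
  have zc: "z \<in> carrier G" using zJ WP_carr[OF J] by blast
  have uu: "u = u' \<otimes> z" using u'_def z_def u x0c by (simp add: m_assoc)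
  have z1: "z = \<one>"
  proof (rule ccontr)
    assume "z \<noteq> \<one>"
    then have "len z \<noteq> 0" using clen_zero zc by blast
    obtain zs where zs: "set zs \<subseteq> J" "wprod G zs = z" "length zs = len z" using WP_red[OF J zJ] by blast
    then obtain zs' s where zs': "zs = zs' @ [s]" using \<open>len z \<noteq> 0\<close> by (metis length_0_conv rev_exhaust)
    have s: "s \<in> J" "s \<in> S" using zs zs' J by auto
    have sc: "s \<in> carrier G" using S_carr[OF s(2)] .
    have zs'S: "set zs' \<subseteq> S" "set zs' \<subseteq> J" using zs zs' J by auto
    define z' where "z' = wprod G zs'"
    have z'c: "z' \<in> carrier G" using zs'S z'_def by simp
    have z'J: "z' \<in> WP J" using zs'S(2) z'_def unfolding parabolic_def by blast
    have zz: "z = z' \<otimes> s" using zs zs' z'_def zs'S sc s(2) wprod_append[of zs' "[s]"] by simp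
    have "u \<otimes> s = u' \<otimes> z'" using uu zz u'c z'c sc S_inv[OF s(2)] by (simp add: m_assoc)
    then have "len (u \<otimes> s) = len u' + len z'" using min_add[OF J u'c mn z'J] by simp
    moreover have "len z' \<le> len z - 1" using clen_le[OF zs'S(1)] z'_def zs zs' by simp
    moreover have "len u = len u' + len z" using min_add[OF J u'c mn zJ] uu by simp
    ultimately have "len (u \<otimes> s) < len u" using \<open>len z \<noteq> 0\<close> by simp
    moreover have "len (u \<otimes> s) > len u" using uX s unfolding minreps_def by blast
    ultimately show False by simp
  qed
  then have "u = u'" using uu u'c by simp
  then show ?thesis using min_add[OF J u'c mn x] by simp
qed

lemma decomp_unique: "J \<subseteq> S \<Longrightarrow> u1 \<in> Xr J \<Longrightarrow> u2 \<in> Xr J \<Longrightarrow> x1 \<in> WP J \<Longrightarrow> x2 \<in> WP J \<Longrightarrow>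
   u1 \<otimes> x1 = u2 \<otimes> x2 \<Longrightarrow> u1 = u2 \<and> x1 = x2"
proof -
  assume J: "J \<subseteq> S" and X: "u1 \<in> Xr J" "u2 \<in> Xr J" and x: "x1 \<in> WP J" "x2 \<in> WP J"
    and e: "u1 \<otimes> x1 = u2 \<otimes> x2"
  have c: "u1 \<in> carrier G" "u2 \<in> carrier G" "x1 \<in> carrier G" "x2 \<in> carrier G"
    using X x Xr_carr WP_carr[OF J] by auto
  define y where "y = x1 \<otimes> inv x2"
  have yJ: "y \<in> WP J" using y_def WP_mult[OF J x(1) WP_inv[OF J x(2)]] by simp
  have yc: "y \<in> carrier G" using y_def c by simp
  have "u2 = u1 \<otimes> y" using e y_def c
    by (metis inv_closed m_assoc r_inv r_one)
  then have l1: "len u2 = len u1 + len y" using rep_add[OF J X(1) yJ] by simp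
  have "u1 = u2 \<otimes> inv y" using \<open>u2 = u1 \<otimes> y\<close> c yc by (simp add: m_assoc)
  then have "len u1 = len u2 + len (inv y)" using rep_add[OF J X(2) WP_inv[OF J yJ]] by simp
  then have "len y = 0" using l1 clen_inv[OF yc] by simp
  then have "y = \<one>" using clen_zero yc by blast
  then have "u1 = u2" using \<open>u2 = u1 \<otimes> y\<close> c by simp
  moreover then have "x1 = x2" using e c by (simp add: Units_eq)
  ultimately show ?thesis by simp
qed

lemma decomp_ex: "J \<subseteq> S \<Longrightarrow> w \<in> carrier G \<Longrightarrow> \<exists>u\<in>Xr J. \<exists>x\<in>WP J. w = u \<otimes> x"
proof -
  assume J: "J \<subseteq> S" and w: "w \<in> carrier G"
  obtain x0 where x0: "x0 \<in> WP J" "\<forall>y\<in>WP J. len (w \<otimes> x0) \<le> len (w \<otimes> y)" using coset_min by blast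
  have x0c: "x0 \<in> carrier G" using x0 WP_carr[OF J] by blast
  define u where "u = w \<otimes> x0"
  have uc: "u \<in> carrier G" using w x0c u_def by simp
  have mn: "\<forall>y\<in>WP J. len u \<le> len (u \<otimes> y)"
  proof
    fix y assume y: "y \<in> WP J"
    then have "x0 \<otimes> y \<in> WP J" using WP_mult[OF J x0(1)] by blast
    moreover have "u \<otimes> y = w \<otimes> (x0 \<otimes> y)" using u_def w x0c y WP_carr[OF J] by (auto simp: m_assoc)
    ultimately show "len u \<le> len (u \<otimes> y)" using x0(2) u_def by metis
  qed
  have "u \<in> Xr J" using min_rep[OF J uc mn] .
  moreover have "inv x0 \<in> WP J" using WP_inv[OF J x0(1)] .
  moreover have "w = u \<otimes> inv x0" using u_def w x0c by (simp add: m_assoc)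
  ultimately show ?thesis by blast
qed

lemma pq_pc: "J \<subseteq> S \<Longrightarrow> w \<in> carrier G \<Longrightarrow> pq J w \<in> Xr J \<and> pc J w \<in> WP J \<and> w = pq J w \<otimes> pc J w"
proof -
  assume J: "J \<subseteq> S" and w: "w \<in> carrier G"
  have ex1: "\<exists>!u. u \<in> Xr J \<and> (\<exists>x\<in>WP J. w = u \<otimes> x)"
    using decomp_ex[OF J w] decomp_unique[OF J] by metis
  then have q: "pq J w \<in> Xr J \<and> (\<exists>x\<in>WP J. w = pq J w \<otimes> x)"
    unfolding par_quot_def by (rule theI')
  have ex2: "\<exists>!x. x \<in> WP J \<and> w = pq J w \<otimes> x"
    using q decomp_unique[OF J] by metis
  then have "pc J w \<in> WP J \<and> w = pq J w \<otimes> pc J w"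
    unfolding par_comp_def by (rule theI')
  then show ?thesis using q by simp
qed

lemma pq_pc_char: "J \<subseteq> S \<Longrightarrow> u \<in> Xr J \<Longrightarrow> x \<in> WP J \<Longrightarrow> pq J (u \<otimes> x) = u \<and> pc J (u \<otimes> x) = x"
proof -
  assume J: "J \<subseteq> S" and u: "u \<in> Xr J" and x: "x \<in> WP J"
  have w: "u \<otimes> x \<in> carrier G" using u x Xr_carr WP_carr[OF J] by blast
  show ?thesis using pq_pc[OF J w] decomp_unique[OF J _ u _ x] by metis
qed

lemma len_decomp: "J \<subseteq> S \<Longrightarrow> w \<in> carrier G \<Longrightarrow> len w = len (pq J w) + len (pc J w)"
  using pq_pc rep_add by metis

lemma pq_carr: "J \<subseteq> S \<Longrightarrow> w \<in> carrier G \<Longrightarrow> pq J w \<in> carrier G"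
  using pq_pc Xr_carr by blast

lemma pc_carr: "J \<subseteq> S \<Longrightarrow> w \<in> carrier G \<Longrightarrow> pc J w \<in> carrier G"
  using pq_pc WP_carr by blast

lemma one_Xr: "J \<subseteq> S \<Longrightarrow> \<one> \<in> Xr J"
  unfolding minreps_def using clen_S S_carr by auto

lemma pc_WP: "J \<subseteq> S \<Longrightarrow> w \<in> WP J \<Longrightarrow> pc J w = w \<and> pq J w = \<one>"
proof -
  assume J: "J \<subseteq> S" and w: "w \<in> WP J"
  have "w = \<one> \<otimes> w" using w WP_carr[OF J] by auto
  then show ?thesis using pq_pc_char[OF J one_Xr[OF J] w] by metis
qed

lemma pc_Xr: "J \<subseteq> S \<Longrightarrow> u \<in> Xr J \<Longrightarrow> pc J u = \<one> \<and> pq J u = u"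
proof -
  assume J: "J \<subseteq> S" and u: "u \<in> Xr J"
  have "u = u \<otimes> \<one>" using u Xr_carr by auto
  then show ?thesis using pq_pc_char[OF J u one_WP] by metis
qed

lemma supp_pc: "J \<subseteq> S \<Longrightarrow> w \<in> carrier G \<Longrightarrow> sp (pc J w) \<subseteq> J \<inter> sp w \<and> sp (pq J w) \<subseteq> sp w"
proof -
  assume J: "J \<subseteq> S" and w: "w \<in> carrier G"
  have d: "pq J w \<in> Xr J" "pc J w \<in> WP J" "w = pq J w \<otimes> pc J w" using pq_pc[OF J w] by auto
  have c: "pq J w \<in> carrier G" "pc J w \<in> carrier G" using pq_carr[OF J w] pc_carr[OF J w] by auto
  have "sp w = sp (pq J w) \<union> sp (pc J w)" using supp_add[OF c] len_decomp[OF J w] d(3) by metis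
  moreover have "sp (pc J w) \<subseteq> J" using WP_iff[OF J c(2)] d(2) by blast
  ultimately show ?thesis by blast
qed


lemma pc_comp: "K \<subseteq> J \<Longrightarrow> J \<subseteq> S \<Longrightarrow> v \<in> carrier G \<Longrightarrow>
   pc K (pc J v) = pc K v \<and> pq K v = pq J v \<otimes> pq K (pc J v)"
proof -
  assume KJ: "K \<subseteq> J" and J: "J \<subseteq> S" and v: "v \<in> carrier G"
  have K: "K \<subseteq> S" using KJ J by blast
  define a where "a = pq J v"
  define b where "b = pc J v"
  have d: "a \<in> Xr J" "b \<in> WP J" "v = a \<otimes> b" using pq_pc[OF J v] a_def b_def by auto
  have ac: "a \<in> carrier G" using d Xr_carr by blast
  have bc: "b \<in> carrier G" using d WP_carr[OF J] by blast
  define b1 where "b1 = pq K b"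
  define b2 where "b2 = pc K b"
  have d2: "b1 \<in> Xr K" "b2 \<in> WP K" "b = b1 \<otimes> b2" using pq_pc[OF K bc] b1_def b2_def by auto
  have b1c: "b1 \<in> carrier G" using d2 Xr_carr by blast
  have b2c: "b2 \<in> carrier G" using d2 WP_carr[OF K] by blast
  have b2J: "b2 \<in> WP J" using d2 WP_mono[OF KJ] by blast
  have "b1 = b \<otimes> inv b2" using d2 b1c b2c by (simp add: m_assoc)
  then have b1J: "b1 \<in> WP J" using WP_mult[OF J d(2) WP_inv[OF J b2J]] by simp
  have ab1: "a \<otimes> b1 \<in> Xr K"
    unfolding minreps_def
  proof (intro CollectI conjI ballI)
    show "a \<otimes> b1 \<in> carrier G" using ac b1c by simp
    fix s assume s: "s \<in> K"
    have sJ: "s \<in> WP J" using WP_gen[of s J] s KJ J by blast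
    have sc: "s \<in> carrier G" using s K S_carr by blast
    have "len (a \<otimes> b1 \<otimes> s) = len a + len (b1 \<otimes> s)"
      using rep_add[OF J d(1) WP_mult[OF J b1J sJ]] ac b1c sc by (simp add: m_assoc)
    moreover have "len (a \<otimes> b1) = len a + len b1" using rep_add[OF J d(1) b1J] .
    moreover have "len (b1 \<otimes> s) > len b1" using d2(1) s unfolding minreps_def by blast
    ultimately show "len (a \<otimes> b1) < len (a \<otimes> b1 \<otimes> s)" by simp
  qed
  have "v = (a \<otimes> b1) \<otimes> b2" using d d2 ac b1c b2c by (simp add: m_assoc)
  then have "pq K v = a \<otimes> b1 \<and> pc K v = b2" using pq_pc_char[OF K ab1 d2(2)] by simp
  then show ?thesis using a_def b_def b1_def b2_def by simp
qed

lemma des_shift: "J \<subseteq> S \<Longrightarrow> a \<in> Xr J \<Longrightarrow> y \<in> WP J \<Longrightarrow> s \<in> J \<Longrightarrow> (s \<in> Des (a \<otimes> y) \<longleftrightarrow> s \<in> Des y)"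
proof -
  assume J: "J \<subseteq> S" and a: "a \<in> Xr J" and y: "y \<in> WP J" and s: "s \<in> J"
  have ac: "a \<in> carrier G" using a Xr_carr by blast
  have yc: "y \<in> carrier G" using y WP_carr[OF J] by blast
  have sc: "s \<in> carrier G" using s J S_carr by blast
  have "len (a \<otimes> y \<otimes> s) = len a + len (y \<otimes> s)"
    using rep_add[OF J a WP_mult[OF J y WP_gen[OF s J]]] ac yc sc by (simp add: m_assoc)
  moreover have "len (a \<otimes> y) = len a + len y" using rep_add[OF J a y] .
  ultimately show ?thesis unfolding descents_def using s J by auto
qed

lemma WP_empty: "WP {} = {\<one>}"
  unfolding parabolic_def by auto

lemma le_iff: "cox_le G S u v \<longleftrightarrow> u \<in> carrier G \<and> v \<in> carrier G \<and> pc (sp u) v = u"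
  unfolding cox_le_def by simp

lemma le_supp: "cox_le G S z v \<Longrightarrow> sp z \<subseteq> sp v"
  using supp_pc[of "sp z" v] supp_S[of z] unfolding le_iff by auto

lemma le_strict: "cox_le G S z v \<Longrightarrow> z \<noteq> v \<Longrightarrow> card (sp z) < card (sp v)"
proof -
  assume le: "cox_le G S z v" and ne: "z \<noteq> v"
  have v: "v \<in> carrier G" using le le_iff by blast
  have "sp z \<noteq> sp v"
  proof
    assume "sp z = sp v"
    then have "pc (sp v) v = z" using le le_iff by metis
    moreover have "pc (sp v) v = v" using pc_WP[OF supp_S[OF v] WP_supp[OF v]] by blast
    ultimately show False using ne by simp
  qed
  then have "sp z \<subset> sp v" using le_supp[OF le] by blast
  then show ?thesis using psubset_card_mono supp_fin by blast
qed

lemma le_refl: "v \<in> carrier G \<Longrightarrow> cox_le G S v v"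
  unfolding le_iff using pc_WP[OF supp_S WP_supp] by blast

lemma le_one: "w \<in> carrier G \<Longrightarrow> cox_le G S \<one> w"
proof -
  assume w: "w \<in> carrier G"
  have "pc {} w \<in> WP {}" using pq_pc[of "{}" w] w by simp
  then show ?thesis unfolding le_iff using w WP_empty by simp
qed

lemma interval_eq:
  assumes le: "cox_le G S u v"
  shows "{z \<in> carrier G. cox_le G S u z \<and> cox_le G S z v} =
         (\<lambda>M. pc M v) ` {M. sp u \<subseteq> M \<and> M \<subseteq> sp v \<and> sp (pc M v) = M}"
proof -
  have u: "u \<in> carrier G" and v: "v \<in> carrier G" and pu: "pc (sp u) v = u" using le le_iff by auto
  have T: "sp v \<subseteq> S" using supp_S[OF v] .
  show ?thesis
  proof (intro equalityI subsetI)
    fix z assume "z \<in> {z \<in> carrier G. cox_le G S u z \<and> cox_le G S z v}"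
    then have z: "z \<in> carrier G" "cox_le G S u z" "cox_le G S z v" by auto
    have "z = pc (sp z) v" using z(3) le_iff by metis
    moreover have "sp u \<subseteq> sp z" using le_supp[OF z(2)] .
    moreover have "sp z \<subseteq> sp v" using le_supp[OF z(3)] .
    ultimately show "z \<in> (\<lambda>M. pc M v) ` {M. sp u \<subseteq> M \<and> M \<subseteq> sp v \<and> sp (pc M v) = M}" by auto
  next
    fix z assume "z \<in> (\<lambda>M. pc M v) ` {M. sp u \<subseteq> M \<and> M \<subseteq> sp v \<and> sp (pc M v) = M}"
    then obtain M where M: "sp u \<subseteq> M" "M \<subseteq> sp v" "sp (pc M v) = M" and zM: "z = pc M v" by blast
    have MS: "M \<subseteq> S" using M T by blast
    have zc: "z \<in> carrier G" using pc_carr[OF MS v] zM by simp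
    have "cox_le G S z v" unfolding le_iff using zc v zM M by simp
    moreover have "pc (sp u) z = u" using pc_comp[OF M(1) MS v] zM pu by simp
    then have "cox_le G S u z" unfolding le_iff using u zc by simp
    ultimately show "z \<in> {z \<in> carrier G. cox_le G S u z \<and> cox_le G S z v}" using zc by simp
  qed
qed

lemma interval_inj: "inj_on (\<lambda>M. pc M v) {M. sp u \<subseteq> M \<and> M \<subseteq> sp v \<and> sp (pc M v) = M}"
  by (rule inj_onI) (metis (mono_tags, lifting) mem_Collect_eq)

lemma fam_fin: "finite {M. sp u \<subseteq> M \<and> M \<subseteq> sp v \<and> sp (pc M v) = M}"
  by (rule finite_subset[of _ "Pow (sp v)"]) (auto simp: supp_fin)


lemma sum_pow_neg: "finite A \<Longrightarrow> (\<Sum>N\<in>Pow A. (-1::int) ^ card N) = (if A = {} then 1 else 0)"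
proof (induct A rule: finite_induct)
  case empty
  then show ?case by simp
next
  case (insert x F)
  have disj: "Pow F \<inter> insert x ` Pow F = {}" using insert(2) by auto
  have inj: "inj_on (insert x) (Pow F)" using insert(2) by (auto intro!: inj_onI)
  have "(\<Sum>N\<in>insert x ` Pow F. (-1::int) ^ card N) = (\<Sum>N\<in>Pow F. (-1::int) ^ card (insert x N))"
    using sum.reindex[OF inj] by simp
  also have "\<dots> = (\<Sum>N\<in>Pow F. - ((-1::int) ^ card N))"
  proof (rule sum.cong)
    fix N assume "N \<in> Pow F"
    then have "finite N" "x \<notin> N" using insert(1,2) finite_subset by auto
    then show "(-1::int) ^ card (insert x N) = - ((-1) ^ card N)" by simp
  qed simp
  finally have e: "(\<Sum>N\<in>insert x ` Pow F. (-1::int) ^ card N) = - (\<Sum>N\<in>Pow F. (-1::int) ^ card N)"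
    by (simp add: sum_negf)
  have "(\<Sum>N\<in>Pow (insert x F). (-1::int) ^ card N) = (\<Sum>N\<in>Pow F. (-1::int) ^ card N) + (\<Sum>N\<in>insert x ` Pow F. (-1::int) ^ card N)"
    unfolding Pow_insert using insert(1) disj by (simp add: sum.union_disjoint)
  then show ?case using e by simp
qed

lemma sum_shift: "finite K \<Longrightarrow> finite D \<Longrightarrow> K \<inter> D = {} \<Longrightarrow> D \<noteq> {} \<Longrightarrow>
   (\<Sum>M\<in>{M. K \<subseteq> M \<and> M \<subseteq> K \<union> D}. (-1::int) ^ (card M - card K)) = 0"
proof -
  assume fK: "finite K" and fD: "finite D" and dj: "K \<inter> D = {}" and ne: "D \<noteq> {}"
  have eq: "{M. K \<subseteq> M \<and> M \<subseteq> K \<union> D} = (\<lambda>N. K \<union> N) ` Pow D"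
  proof (intro equalityI subsetI)
    fix M assume "M \<in> {M. K \<subseteq> M \<and> M \<subseteq> K \<union> D}"
    then have "M = K \<union> (M - K)" "M - K \<in> Pow D" by auto
    then show "M \<in> (\<lambda>N. K \<union> N) ` Pow D" by blast
  qed auto
  have inj: "inj_on (\<lambda>N. K \<union> N) (Pow D)"
    by (rule inj_onI) (use dj in blast)
  have "(\<Sum>M\<in>{M. K \<subseteq> M \<and> M \<subseteq> K \<union> D}. (-1::int) ^ (card M - card K)) =
        (\<Sum>N\<in>Pow D. (-1::int) ^ (card (K \<union> N) - card K))"
    unfolding eq using sum.reindex[OF inj] by simp
  also have "\<dots> = (\<Sum>N\<in>Pow D. (-1::int) ^ card N)"
  proof (rule sum.cong)
    fix N assume "N \<in> Pow D"
    then have "finite N" "K \<inter> N = {}" using fD dj finite_subset by auto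
    then show "(-1::int) ^ (card (K \<union> N) - card K) = (-1) ^ card N" using fK by (simp add: card_Un_disjoint)
  qed simp
  also have "\<dots> = 0" using sum_pow_neg[OF fD] ne by simp
  finally show ?thesis .
qed

definition condM where "condM u v \<longleftrightarrow> (sp u = sp v - Des (pq (sp u) v) \<or> u = v)"

definition Fm where "Fm u v = (if u \<in> carrier G \<and> v \<in> carrier G \<and> cox_le G S u v then
    (if condM u v then (-1::int) ^ (card (sp v) - card (sp u)) else 0) else 0)"

lemma cond_iff:
  assumes le: "cox_le G S u v" and M: "sp u \<subseteq> M" "M \<subseteq> sp v" "sp (pc M v) = M"
  shows "condM u (pc M v) \<longleftrightarrow> M \<subseteq> sp u \<union> Des (pq (sp u) v)"
proof -
  have u: "u \<in> carrier G" and v: "v \<in> carrier G" and pu: "pc (sp u) v = u" using le le_iff by auto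
  define K where "K = sp u"
  define z where "z = pc M v"
  have MS: "M \<subseteq> S" using M supp_S[OF v] by blast
  have KS: "K \<subseteq> S" using K_def supp_S[OF u] by blast
  have zc: "z \<in> carrier G" using pc_carr[OF MS v] z_def by simp
  have zM: "z \<in> WP M" using pq_pc[OF MS v] z_def by simp
  have pc2: "pc K z = u" "pq K v = pq M v \<otimes> pq K z" using pc_comp[OF M(1) MS v] pu z_def K_def by auto
  define y where "y = pq K z"
  have d: "y \<in> Xr K" "pc K z \<in> WP K" "z = y \<otimes> pc K z" using pq_pc[OF KS zc] y_def by auto
  have yc: "y \<in> carrier G" using d Xr_carr by blast
  have pKc: "pc K z \<in> carrier G" using d WP_carr[OF KS] by blast
  have "y = (y \<otimes> pc K z) \<otimes> inv (pc K z)" using yc pKc by (simp add: m_assoc)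
  then have "y = z \<otimes> inv (pc K z)" using d(3)[symmetric] by simp
  moreover have "inv (pc K z) \<in> WP M" using WP_inv[OF MS] WP_mono[OF M(1)] d(2) K_def by blast
  ultimately have yM: "y \<in> WP M" using WP_mult[OF MS zM] by simp
  have aM: "pq M v \<in> Xr M" using pq_pc[OF MS v] by simp
  have sh: "s \<in> Des (pq K v) \<longleftrightarrow> s \<in> Des y" if "s \<in> M" for s
    using des_shift[OF MS aM yM that] pc2(2) y_def by simp
  have kd: "K \<inter> Des y = {}" using d(1) unfolding minreps_def descents_def by force
  have "condM u z \<longleftrightarrow> M \<subseteq> K \<union> Des (pq K v)"
  proof
    assume "condM u z"
    then have "K = M - Des y \<or> u = z" unfolding condM_def using M z_def K_def y_def by simp
    then show "M \<subseteq> K \<union> Des (pq K v)"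
    proof
      assume "K = M - Des y"
      then show ?thesis using sh by blast
    next
      assume "u = z"
      then show ?thesis using M z_def K_def by simp
    qed
  next
    assume a: "M \<subseteq> K \<union> Des (pq K v)"
    have "K = M - Des y" using a sh kd M(1) K_def by blast
    then show "condM u z" unfolding condM_def using M z_def K_def y_def by simp
  qed
  then show ?thesis using z_def K_def by simp
qed

lemma fam_filter:
  assumes le: "cox_le G S u v"
  shows "{M. sp u \<subseteq> M \<and> M \<subseteq> sp v \<and> sp (pc M v) = M \<and> M \<subseteq> sp u \<union> Des (pq (sp u) v)} =
         {M. sp u \<subseteq> M \<and> M \<subseteq> sp u \<union> (Des (pq (sp u) v) \<inter> sp v)}"
proof (intro equalityI subsetI)
  fix M assume "M \<in> {M. sp u \<subseteq> M \<and> M \<subseteq> sp v \<and> sp (pc M v) = M \<and> M \<subseteq> sp u \<union> Des (pq (sp u) v)}"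
  then show "M \<in> {M. sp u \<subseteq> M \<and> M \<subseteq> sp u \<union> (Des (pq (sp u) v) \<inter> sp v)}" by blast
next
  fix M assume "M \<in> {M. sp u \<subseteq> M \<and> M \<subseteq> sp u \<union> (Des (pq (sp u) v) \<inter> sp v)}"
  then have M: "sp u \<subseteq> M" "M \<subseteq> sp u \<union> (Des (pq (sp u) v) \<inter> sp v)" by auto
  have u: "u \<in> carrier G" and v: "v \<in> carrier G" and pu: "pc (sp u) v = u" using le le_iff by auto
  define K where "K = sp u"
  have KT: "K \<subseteq> sp v" using le_supp[OF le] K_def by simp
  have MT: "M \<subseteq> sp v" using M KT K_def by blast
  have MS: "M \<subseteq> S" using MT supp_S[OF v] by blast
  have KS: "K \<subseteq> S" using K_def supp_S[OF u] by blast
  define z where "z = pc M v"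
  have zc: "z \<in> carrier G" using pc_carr[OF MS v] z_def by simp
  have zM: "z \<in> WP M" using pq_pc[OF MS v] z_def by simp
  have pc2: "pc K z = u" "pq K v = pq M v \<otimes> pq K z" using pc_comp[OF _ MS v, of K] M(1) pu z_def K_def by auto
  define y where "y = pq K z"
  have d: "y \<in> Xr K" "pc K z \<in> WP K" "z = y \<otimes> pc K z" using pq_pc[OF KS zc] y_def by auto
  have yc: "y \<in> carrier G" using d Xr_carr by blast
  have pKc: "pc K z \<in> carrier G" using d WP_carr[OF KS] by blast
  have "y = (y \<otimes> pc K z) \<otimes> inv (pc K z)" using yc pKc by (simp add: m_assoc)
  then have "y = z \<otimes> inv (pc K z)" using d(3)[symmetric] by simp
  moreover have "inv (pc K z) \<in> WP M" using WP_inv[OF MS] WP_mono[of K M] M(1) d(2) K_def by blast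
  ultimately have yM: "y \<in> WP M" using WP_mult[OF MS zM] by simp
  have aM: "pq M v \<in> Xr M" using pq_pc[OF MS v] by simp
  have "sp z = M"
  proof
    show "sp z \<subseteq> M" using supp_pc[OF MS v] z_def by blast
    show "M \<subseteq> sp z"
    proof
      fix s assume sM: "s \<in> M"
      show "s \<in> sp z"
      proof (cases "s \<in> K")
        case True
        have "sp (pc K z) \<subseteq> sp z" using supp_pc[OF KS zc] by blast
        then have "sp u \<subseteq> sp z" using pc2(1) by simp
        then show ?thesis using True K_def by blast
      next
        case False
        then have "s \<in> Des (pq K v)" using M sM K_def by blast
        then have "s \<in> Des y" using des_shift[OF MS aM yM sM] pc2(2) y_def by simp
        then have "s \<in> sp y" using Des_supp[OF yc] by blast
        moreover have "sp y \<subseteq> sp z" using supp_pc[OF KS zc] y_def by blast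
        ultimately show ?thesis by blast
      qed
    qed
  qed
  then have "sp (pc M v) = M" using z_def by simp
  then show "M \<in> {M. sp u \<subseteq> M \<and> M \<subseteq> sp v \<and> sp (pc M v) = M \<and> M \<subseteq> sp u \<union> Des (pq (sp u) v)}"
    using M MT by blast
qed

lemma interval_sum:
  assumes le: "cox_le G S u v" and ne: "u \<noteq> v"
  shows "(\<Sum>z\<in>{z \<in> carrier G. cox_le G S u z \<and> cox_le G S z v}. Fm u z) = 0"
proof -
  have u: "u \<in> carrier G" and v: "v \<in> carrier G" and pu: "pc (sp u) v = u" using le le_iff by auto
  define K where "K = sp u"
  define D where "D = Des (pq K v)"
  define Fam where "Fam = {M. sp u \<subseteq> M \<and> M \<subseteq> sp v \<and> sp (pc M v) = M}"
  have KS: "K \<subseteq> S" using K_def supp_S[OF u] by blast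
  have "(\<Sum>z\<in>{z \<in> carrier G. cox_le G S u z \<and> cox_le G S z v}. Fm u z) = (\<Sum>M\<in>Fam. Fm u (pc M v))"
    unfolding interval_eq[OF le] Fam_def using sum.reindex[OF interval_inj] by simp
  also have "\<dots> = (\<Sum>M\<in>Fam. if M \<subseteq> K \<union> D then (-1::int) ^ (card M - card K) else 0)"
  proof (rule sum.cong)
    fix M assume MF: "M \<in> Fam"
    then have M: "sp u \<subseteq> M" "M \<subseteq> sp v" "sp (pc M v) = M" using Fam_def by auto
    have zin: "pc M v \<in> {z \<in> carrier G. cox_le G S u z \<and> cox_le G S z v}"
      unfolding interval_eq[OF le] using MF Fam_def by blast
    then show "Fm u (pc M v) = (if M \<subseteq> K \<union> D then (-1::int) ^ (card M - card K) else 0)"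
      unfolding Fm_def using cond_iff[OF le M] M(3) u K_def D_def by auto
  qed simp
  also have "\<dots> = (\<Sum>M\<in>{M\<in>Fam. M \<subseteq> K \<union> D}. (-1::int) ^ (card M - card K))"
    by (rule sum.inter_filter[symmetric]) (simp add: Fam_def fam_fin)
  also have "{M\<in>Fam. M \<subseteq> K \<union> D} = {M. K \<subseteq> M \<and> M \<subseteq> K \<union> (D \<inter> sp v)}"
    using fam_filter[OF le] unfolding Fam_def K_def D_def by simp
  also have "(\<Sum>M\<in>{M. K \<subseteq> M \<and> M \<subseteq> K \<union> (D \<inter> sp v)}. (-1::int) ^ (card M - card K)) = 0"
  proof (rule sum_shift)
    show "finite K" using K_def supp_fin by simp
    show "finite (D \<inter> sp v)" using supp_fin by simp
    have "pq K v \<in> Xr K" using pq_pc[OF KS v] by simp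
    then show "K \<inter> (D \<inter> sp v) = {}" unfolding D_def minreps_def descents_def by force
    show "D \<inter> sp v \<noteq> {}"
    proof
      assume e: "D \<inter> sp v = {}"
      define x where "x = pq K v"
      have xc: "x \<in> carrier G" using pq_carr[OF KS v] x_def by simp
      have T: "sp v \<subseteq> S" using supp_S[OF v] .
      have "x \<in> Xr (sp v)"
        unfolding minreps_def
      proof (intro CollectI conjI ballI)
        show "x \<in> carrier G" using xc .
        fix s assume s: "s \<in> sp v"
        then have "s \<notin> D" using e by blast
        then have "\<not> len (x \<otimes> s) < len x" using s T x_def D_def unfolding descents_def by blast
        then show "len x < len (x \<otimes> s)" using clen_right[of s x] s T xc by auto
      qed
      moreover have "x \<in> WP (sp v)" using WP_iff[OF T xc] supp_pc[OF KS v] x_def by blast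
      ultimately have "x = \<one>" using pc_WP[OF T] pc_Xr[OF T] by metis
      then have "v = pc K v" using pq_pc[OF KS v] x_def pc_carr[OF KS v] by simp
      then show False using pu K_def ne by simp
    qed
  qed
  finally show ?thesis .
qed

lemma Fm_mobius: "is_mobius (cox_le G S) (carrier G) Fm"
  unfolding is_mobius_def
proof (intro allI)
  fix u v
  show "Fm u v = (if u \<in> carrier G \<and> v \<in> carrier G \<and> cox_le G S u v then
           (if u = v then 1 else - (\<Sum>z\<in>{z \<in> carrier G. cox_le G S u z \<and> cox_le G S z v \<and> z \<noteq> v}. Fm u z))
         else 0)"
  proof (cases "u \<in> carrier G \<and> v \<in> carrier G \<and> cox_le G S u v")
    case False
    then have "Fm u v = 0" unfolding Fm_def by auto
    then show ?thesis by (subst if_not_P[OF False])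
  next
    case True
    then have le: "cox_le G S u v" and u: "u \<in> carrier G" and v: "v \<in> carrier G" by auto
    show ?thesis
    proof (cases "u = v")
      case True
      then show ?thesis unfolding Fm_def condM_def using u by simp
    next
      case ne: False
      define I where "I = {z \<in> carrier G. cox_le G S u z \<and> cox_le G S z v}"
      have fI: "finite I" unfolding I_def interval_eq[OF le] using fam_fin by simp
      have vI: "v \<in> I" unfolding I_def using le le_refl[OF v] v by simp
      have "I = insert v {z \<in> carrier G. cox_le G S u z \<and> cox_le G S z v \<and> z \<noteq> v}" using vI I_def by blast
      then have "(\<Sum>z\<in>I. Fm u z) = Fm u v + (\<Sum>z\<in>{z \<in> carrier G. cox_le G S u z \<and> cox_le G S z v \<and> z \<noteq> v}. Fm u z)"
        using fI by (simp add: sum.insert_remove)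
      moreover have "(\<Sum>z\<in>I. Fm u z) = 0" using interval_sum[OF le ne] I_def by simp
      ultimately show ?thesis using True ne by simp
    qed
  qed
qed

lemma mobius_unique: "is_mobius (cox_le G S) (carrier G) f \<Longrightarrow> is_mobius (cox_le G S) (carrier G) g \<Longrightarrow> f = g"
proof -
  assume f: "is_mobius (cox_le G S) (carrier G) f" and g: "is_mobius (cox_le G S) (carrier G) g"
  have "\<forall>v. card (sp v) = n \<longrightarrow> (\<forall>u. f u v = g u v)" for n
  proof (induct n rule: less_induct)
    case (less n)
    show ?case
    proof (intro allI impI)
      fix v u assume n: "card (sp v) = n"
      have IH: "f u z = g u z" if "z \<in> {z \<in> carrier G. cox_le G S u z \<and> cox_le G S z v \<and> z \<noteq> v}" for z
      proof -
        have "cox_le G S z v" "z \<noteq> v" using that by auto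
        then have "card (sp z) < n" using le_strict n by blast
        then show ?thesis using less(1)[of "card (sp z)"] by blast
      qed
      have "f u v = (if u \<in> carrier G \<and> v \<in> carrier G \<and> cox_le G S u v then
           (if u = v then 1 else - (\<Sum>z\<in>{z \<in> carrier G. cox_le G S u z \<and> cox_le G S z v \<and> z \<noteq> v}. f u z)) else 0)"
        by (rule f[unfolded is_mobius_def, rule_format])
      also have "\<dots> = (if u \<in> carrier G \<and> v \<in> carrier G \<and> cox_le G S u v then
           (if u = v then 1 else - (\<Sum>z\<in>{z \<in> carrier G. cox_le G S u z \<and> cox_le G S z v \<and> z \<noteq> v}. g u z)) else 0)"
      proof -
        have "sum (f u) {z \<in> carrier G. cox_le G S u z \<and> cox_le G S z v \<and> z \<noteq> v} =
              sum (g u) {z \<in> carrier G. cox_le G S u z \<and> cox_le G S z v \<and> z \<noteq> v}"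
          by (rule sum.cong[OF refl IH])
        then show ?thesis by simp
      qed
      also have "\<dots> = g u v" by (rule g[unfolded is_mobius_def, rule_format, symmetric])
      finally show "f u v = g u v" .
    qed
  qed
  then show "f = g" by blast
qed

lemma mobius_eq: "mobius (cox_le G S) (carrier G) = Fm"
  unfolding mobius_def using Fm_mobius mobius_unique by blast

end

fun alt :: "'a \<Rightarrow> 'a \<Rightarrow> nat \<Rightarrow> 'a list" where
  "alt r s 0 = []"
| "alt r s (Suc k) = r # alt s r k"

lemma alt_set: "set (alt r s k) \<subseteq> {r, s}"
  by (induct k arbitrary: r s) auto

lemma alt_len[simp]: "length (alt r s k) = k"
  by (induct k arbitrary: r s) auto

lemma alt_snoc: "alt r s (Suc k) = alt r s k @ [if even k then r else s]"
  by (induct k arbitrary: r s) auto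

lemma alt_nth: "i < k \<Longrightarrow> alt r s k ! i = (if even i then r else s)"
proof (induct k arbitrary: i r s)
  case 0
  then show ?case by simp
next
  case (Suc k)
  then show ?case by (cases i) auto
qed

context coxl
begin

lemma alt_S: "r \<in> S \<Longrightarrow> s \<in> S \<Longrightarrow> set (alt r s k) \<subseteq> S"
  using alt_set[of r s k] by blast

lemma dihedral:
  assumes r: "r \<in> S" and s: "s \<in> S" and rs: "r \<noteq> s" and k: "1 \<le> k"
    and red: "len (wprod G (alt r s k)) = k"
    and lt: "len (wprod G (alt r s k) \<otimes> (if even k then r else s)) < k"
  shows "wprod G (alt r s k) = wprod G (alt s r k)"
proof -
  define xs where "xs = alt r s k"
  define q where "q = (if even k then r else s)"
  have qS: "q \<in> S" using q_def r s by simp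
  have qc: "q \<in> carrier G" using S_carr[OF qS] .
  have xsS: "set xs \<subseteq> S" using alt_S[OF r s] xs_def by simp
  have lx: "length xs = k" using xs_def by simp
  have dc: "wprod G xs \<in> carrier G" using xsS by simp
  obtain k' where k': "k = Suc k'" using k by (cases k) auto
  have "len (wprod G xs \<otimes> q) \<le> length xs" using lt xs_def q_def lx by simp
  from exch_right[OF qS xsS _ this] red xs_def lx obtain i where i: "i < k"
    "wprod G xs \<otimes> q = wprod G (take i xs @ drop (Suc i) xs)" by auto
  have lb: "k \<le> len (wprod G xs \<otimes> q) + 1" using clen_right[OF qS dc] red xs_def by auto
  show ?thesis
  proof (cases "i = 0")
    case True
    have "take i xs @ drop (Suc i) xs = alt s r k'" using True xs_def k' by simp
    then have e: "wprod G xs \<otimes> q = wprod G (alt s r k')" using i(2) by simp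
    have ac: "wprod G (alt s r k') \<in> carrier G" using alt_S[OF s r] by simp
    have "wprod G xs = wprod G xs \<otimes> q \<otimes> q" using S_inv[OF qS] dc qc by (simp add: m_assoc)
    also have "\<dots> = wprod G (alt s r k') \<otimes> q" using e by simp
    also have "\<dots> = wprod G (alt s r k' @ [q])" using wprod_append[of "alt s r k'" "[q]"] alt_S[OF s r] qS qc by simp
    also have "alt s r k' @ [q] = alt s r k" using alt_snoc[of s r k'] k' q_def by simp
    finally show ?thesis using xs_def by simp
  next
    case False
    show ?thesis
    proof (cases "i = k'")
      case True
      define p where "p = (if even k' then r else s)"
      have pS: "p \<in> S" using p_def r s by simp
      have pc: "p \<in> carrier G" using S_carr[OF pS] .
      have xs2: "xs = alt r s k' @ [p]" using alt_snoc[of r s k'] xs_def k' p_def by simp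
      have "take i xs @ drop (Suc i) xs = alt r s k'" using True xs2 by simp
      then have e: "wprod G xs \<otimes> q = wprod G (alt r s k')" using i(2) by simp
      have ac: "wprod G (alt r s k') \<in> carrier G" using alt_S[OF r s] by simp
      have "wprod G xs = wprod G (alt r s k') \<otimes> p"
        using xs2 wprod_append[of "alt r s k'" "[p]"] alt_S[OF r s] pS pc by simp
      then have "wprod G (alt r s k') \<otimes> (p \<otimes> q) = wprod G (alt r s k') \<otimes> \<one>"
        using e ac pc qc by (simp add: m_assoc)
      then have "p \<otimes> q = \<one>" using ac pc qc by (simp add: Units_eq)
      then have "p = q" using S_inv[OF qS] pc qc by (metis inv_equality S_inv_eq qS)
      then show ?thesis using p_def q_def k' rs by (simp split: if_splits)
    next
      case False2: False
      have i1: "0 < i" "Suc i < k" using False False2 i(1) k' by auto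
      define a where "a = xs ! (i - 1)"
      have aeq: "xs ! Suc i = a" using alt_nth[of "i - 1" k r s] alt_nth[of "Suc i" k r s] i1 xs_def a_def
        by (simp add: even_Suc)
      have aS: "a \<in> S" using a_def xsS i1 lx by (metis less_imp_diff_less nth_mem subsetD Suc_lessD)
      have ac: "a \<in> carrier G" using S_carr[OF aS] .
      have t: "take i xs = take (i - 1) xs @ [a]" using i1 lx a_def
        by (metis Suc_diff_1 Suc_lessD less_trans_Suc take_Suc_conv_app_nth)
      have d: "drop (Suc i) xs = a # drop (Suc (Suc i)) xs" using i1 lx aeq by (metis Cons_nth_drop_Suc)
      define L where "L = take (i - 1) xs"
      define R where "R = drop (Suc (Suc i)) xs"
      have LS: "set L \<subseteq> S" using xsS L_def set_take_subset by (metis subset_trans)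
      have RS: "set R \<subseteq> S" using xsS R_def set_drop_subset by (metis subset_trans)
      have Lc: "wprod G L \<in> carrier G" using LS by simp
      have Rc: "wprod G R \<in> carrier G" using RS by simp
      have "take i xs @ drop (Suc i) xs = L @ (a # a # R)" using t d L_def R_def by simp
      then have "wprod G (take i xs @ drop (Suc i) xs) = wprod G L \<otimes> (a \<otimes> (a \<otimes> wprod G R))"
        using wprod_append[OF LS, of "a # a # R"] RS aS by simp
      also have "\<dots> = wprod G L \<otimes> wprod G R" using S_inv[OF aS] ac Rc by (simp add: m_assoc[symmetric])
      also have "\<dots> = wprod G (L @ R)" using wprod_append[OF LS RS] by simp
      finally have "len (wprod G xs \<otimes> q) \<le> length (L @ R)" using i(2) clen_le[of "L @ R"] LS RS by simp
      moreover have "length (L @ R) = k - 3" using L_def R_def lx i1 by simp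
      ultimately show ?thesis using lb i1 by simp
    qed
  qed
qed


lemma star:
  assumes K: "K \<subseteq> S" and zK: "z \<in> WP K" and desc: "\<forall>s\<in>K. len (z \<otimes> s) < len z"
  shows "y \<in> WP K \<Longrightarrow> len z = len y + len (inv y \<otimes> z)"
proof -
  have zc: "z \<in> carrier G" using zK WP_carr[OF K] by blast
  define A where "A y \<longleftrightarrow> y \<in> WP K \<and> len z = len y + len (inv y \<otimes> z)" for y
  have Kc: "\<And>t. t \<in> K \<Longrightarrow> t \<in> carrier G" using K S_carr by blast
  have WPc: "\<And>y. y \<in> WP K \<Longrightarrow> y \<in> carrier G" using WP_carr[OF K] by blast
  have step1: "A (y \<otimes> t)" if Ay: "A y" and t: "t \<in> K" and l1: "len (y \<otimes> t) = len y + 1"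
      and l2: "len (t \<otimes> (inv y \<otimes> z)) + 1 = len (inv y \<otimes> z)" for y t
  proof -
    have yc: "y \<in> carrier G" using Ay A_def WPc by blast
    have tc: "t \<in> carrier G" using Kc[OF t] .
    have "inv (y \<otimes> t) \<otimes> z = t \<otimes> (inv y \<otimes> z)"
      using yc tc zc S_inv_eq[of t] t K by (simp add: inv_mult_group m_assoc subsetD)
    moreover have "y \<otimes> t \<in> WP K" using WP_mult[OF K _ WP_gen[OF t K]] Ay A_def by blast
    ultimately show ?thesis using Ay l1 l2 unfolding A_def by simp
  qed
  have P: "\<forall>y s. A y \<and> len (inv y \<otimes> z) = n \<and> s \<in> K \<and> len y < len (y \<otimes> s) \<longrightarrow> A (y \<otimes> s)" for n
  proof (induct n rule: less_induct)
    case (less n)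
    show ?case
    proof (intro allI impI)
      fix y s assume H: "A y \<and> len (inv y \<otimes> z) = n \<and> s \<in> K \<and> len y < len (y \<otimes> s)"
      then have Ay: "A y" and n: "len (inv y \<otimes> z) = n" and s: "s \<in> K" and ys: "len y < len (y \<otimes> s)" by auto
      have yK: "y \<in> WP K" using Ay A_def by simp
      have yc: "y \<in> carrier G" using WPc[OF yK] .
      have sS: "s \<in> S" using s K by blast
      have sc: "s \<in> carrier G" using Kc[OF s] .
      have ys1: "len (y \<otimes> s) = len y + 1" using clen_right[OF sS yc] ys by auto
      define c where "c = inv y \<otimes> z"
      have cK: "c \<in> WP K" using c_def WP_mult[OF K WP_inv[OF K yK] zK] by simp
      have cc: "c \<in> carrier G" using WPc[OF cK] .
      have yc_z: "y \<otimes> c = z" using c_def yc zc by (simp add: m_assoc[symmetric])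
      show "A (y \<otimes> s)"
      proof (cases "c = \<one>")
        case True
        then have "y = z" using yc_z yc by simp
        then show ?thesis using desc s ys by force
      next
        case False
        then have lc0: "len c \<noteq> 0" using clen_zero cc by blast
        obtain cs where cs: "set cs \<subseteq> K" "wprod G cs = c" "length cs = len c" using WP_red[OF K cK] by blast
        then obtain r cs' where rcs: "cs = r # cs'" using lc0 by (cases cs) auto
        have r: "r \<in> K" using cs rcs by simp
        have rS: "r \<in> S" using r K by blast
        have rc: "r \<in> carrier G" using Kc[OF r] .
        have cs'S: "set cs' \<subseteq> S" using cs rcs K by auto
        have "r \<otimes> c = r \<otimes> (r \<otimes> wprod G cs')" using cs(2) rcs by simp
        also have "\<dots> = wprod G cs'" using S_inv[OF rS] rc cs'S by (simp add: m_assoc[symmetric])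
        finally have rcc: "r \<otimes> c = wprod G cs'" .
        have lrc: "len (r \<otimes> c) + 1 = len c"
        proof -
          have "len (r \<otimes> c) \<le> length cs'" using rcc clen_le[OF cs'S] by simp
          then show ?thesis using clen_left[OF rS cc] cs(3) rcs by auto
        qed
        show ?thesis
        proof (cases "r = s")
          case True
          then show ?thesis using step1[OF Ay s ys1] lrc c_def by simp
        next
          case rs: False
          have "(y \<otimes> r) \<otimes> (r \<otimes> c) = y \<otimes> ((r \<otimes> r) \<otimes> c)" using yc rc cc by (simp add: m_assoc)
          also have "\<dots> = z" using yc_z S_inv[OF rS] cc by simp
          finally have "z = (y \<otimes> r) \<otimes> (r \<otimes> c)" by simp
          then have "len z \<le> len (y \<otimes> r) + len (r \<otimes> c)" using clen_mult yc rc cc by (metis m_closed)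
          then have "len y + 1 \<le> len (y \<otimes> r)" using Ay A_def c_def lrc by simp
          then have yr1: "len (y \<otimes> r) = len y + 1" using clen_right[OF rS yc] by auto
          have Ayr: "A (y \<otimes> r)" using step1[OF Ay r yr1] lrc c_def by simp
          define J where "J = {r, s}"
          have J: "J \<subseteq> S" using J_def rS sS by simp
          have JK: "J \<subseteq> K" using J_def r s by simp
          have yX: "y \<in> Xr J" unfolding minreps_def J_def using yc ys yr1 by auto
          show ?thesis
          proof (rule ccontr)
            assume nA: "\<not> A (y \<otimes> s)"
            have main: "1 \<le> j \<longrightarrow> len (wprod G (alt r s j)) = j \<and> A (y \<otimes> wprod G (alt r s j))" for j
            proof (induct j)
              case 0
              then show ?case by simp
            next
              case (Suc j)
              show ?case
              proof (cases "j = 0")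
                case True
                then show ?thesis using Ayr clen_S[OF rS] rc by simp
              next
                case False
                then have IHj: "len (wprod G (alt r s j)) = j" "A (y \<otimes> wprod G (alt r s j))" using Suc by auto
                define d where "d = wprod G (alt r s j)"
                define q where "q = (if even j then r else s)"
                have qJ: "q \<in> J" using q_def J_def by simp
                have qS: "q \<in> S" using qJ J by blast
                have qc: "q \<in> carrier G" using S_carr[OF qS] .
                have aJ: "set (alt r s j) \<subseteq> J" using alt_set J_def by simp
                have dJ: "d \<in> WP J" using aJ d_def unfolding parabolic_def by blast
                have dc: "d \<in> carrier G" using dJ WP_carr[OF J] by blast
                have dq: "wprod G (alt r s (Suc j)) = d \<otimes> q"
                  using alt_snoc[of r s j] wprod_append[of "alt r s j" "[q]"] alt_S[OF rS sS] qS qc d_def q_def by simp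
                have ld: "len (y \<otimes> d) = len y + j" using rep_add[OF J yX dJ] IHj d_def by simp
                have Ayd: "A (y \<otimes> d)" using IHj d_def by simp
                show ?thesis
                proof (cases "len (d \<otimes> q) = Suc j")
                  case True
                  have dqJ: "d \<otimes> q \<in> WP J" using WP_mult[OF J dJ WP_gen[OF qJ J]] .
                  have "len (y \<otimes> (d \<otimes> q)) = len y + Suc j" using rep_add[OF J yX dqJ] True by simp
                  then have lt1: "len (y \<otimes> d) < len (y \<otimes> d \<otimes> q)" using ld yc dc qc by (simp add: m_assoc)
                  have nlt: "len (inv (y \<otimes> d) \<otimes> z) < n"
                    using Ayd A_def ld Ay n False unfolding A_def by simp
                  have "A (y \<otimes> d \<otimes> q)"
                    using less(1)[OF nlt] Ayd lt1 qJ JK by blast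
                  then show ?thesis using True dq yc dc qc by (simp add: m_assoc)
                next
                  case False2: False
                  have "len (d \<otimes> q) + 1 = len d" using clen_right[OF qS dc] False2 IHj d_def by auto
                  then have "len (d \<otimes> q) < j" using IHj d_def by simp
                  then have dsr: "d = wprod G (alt s r j)"
                    using dihedral[OF rS sS rs _ IHj(1)] False d_def q_def by simp
                  obtain j' where j': "j = Suc j'" using False by (cases j) auto
                  define e where "e = wprod G (alt r s j')"
                  have ec: "e \<in> carrier G" using alt_S[OF rS sS] e_def by simp
                  have le: "len e \<le> j'" using clen_le[OF alt_S[OF rS sS]] e_def by simp
                  have dse: "d = s \<otimes> e" using dsr j' e_def by simp
                  have ysK: "y \<otimes> s \<in> WP K" using WP_mult[OF K yK WP_gen[OF s K]] .
                  have ysc: "y \<otimes> s \<in> carrier G" using yc sc by simp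
                  define W where "W = inv (y \<otimes> s) \<otimes> z"
                  have Wc: "W \<in> carrier G" using W_def ysc zc by simp
                  have "inv (y \<otimes> d) \<otimes> z = inv e \<otimes> W"
                    using dse yc sc ec zc W_def by (simp add: inv_mult_group m_assoc)
                  then have "e \<otimes> (inv (y \<otimes> d) \<otimes> z) = (e \<otimes> inv e) \<otimes> W" using ec Wc by (simp add: m_assoc[symmetric])
                  then have eq: "inv (y \<otimes> s) \<otimes> z = e \<otimes> (inv (y \<otimes> d) \<otimes> z)" using ec Wc W_def by simp
                  have "len (inv (y \<otimes> s) \<otimes> z) \<le> len e + len (inv (y \<otimes> d) \<otimes> z)"
                    using eq clen_mult ec yc dc zc by (metis inv_closed m_closed)
                  then have up: "len (inv (y \<otimes> s) \<otimes> z) + len (y \<otimes> s) \<le> len z"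
                    using le Ayd ld ys1 j' unfolding A_def by simp
                  have "z = (y \<otimes> s) \<otimes> (inv (y \<otimes> s) \<otimes> z)" using ysc zc by (simp add: m_assoc[symmetric])
                  then have "len z \<le> len (y \<otimes> s) + len (inv (y \<otimes> s) \<otimes> z)"
                    using clen_mult ysc zc by (metis inv_closed m_closed)
                  then have "A (y \<otimes> s)" using up ysK unfolding A_def by simp
                  then show ?thesis using nA by simp
                qed
              qed
            qed
            have "A (y \<otimes> wprod G (alt r s (Suc (len z))))" "len (wprod G (alt r s (Suc (len z)))) = Suc (len z)"
              using main[of "Suc (len z)"] by auto
            moreover have "wprod G (alt r s (Suc (len z))) \<in> WP J"
              using alt_set[of r s] J_def unfolding parabolic_def by blast
            ultimately have "len (y \<otimes> wprod G (alt r s (Suc (len z)))) = len y + Suc (len z)"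
              "len z \<ge> len (y \<otimes> wprod G (alt r s (Suc (len z))))"
              using rep_add[OF J yX] unfolding A_def by auto
            then show False by simp
          qed
        qed
      qed
    qed
  qed
  have all: "\<forall>y\<in>WP K. len y = m \<longrightarrow> A y" for m
  proof (induct m)
    case 0
    show ?case
    proof (intro ballI impI)
      fix y assume "y \<in> WP K" "len y = 0"
      then have "y = \<one>" using clen_zero WPc by blast
      then show "A y" unfolding A_def using zc by simp
    qed
  next
    case (Suc m)
    show ?case
    proof (intro ballI impI)
      fix y assume yK: "y \<in> WP K" and ly: "len y = Suc m"
      obtain ys where ys: "set ys \<subseteq> K" "wprod G ys = y" "length ys = len y" using WP_red[OF K yK] by blast
      then obtain ys' s where ys': "ys = ys' @ [s]" using ly by (metis length_0_conv nat.distinct(1) rev_exhaust)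
      have s: "s \<in> K" "s \<in> S" using ys ys' K by auto
      have sc: "s \<in> carrier G" using S_carr[OF s(2)] .
      have ys'S: "set ys' \<subseteq> S" "set ys' \<subseteq> K" using ys ys' K by auto
      define y' where "y' = wprod G ys'"
      have y'c: "y' \<in> carrier G" using ys'S y'_def by simp
      have y'K: "y' \<in> WP K" using ys'S(2) y'_def unfolding parabolic_def by blast
      have yy: "y = y' \<otimes> s" using ys ys' y'_def ys'S sc s(2) wprod_append[of ys' "[s]"] by simp
      have l1: "len y' \<le> m" using clen_le[OF ys'S(1)] y'_def ys ys' ly by simp
      have "len y \<le> len y' + 1" using yy clen_mult[OF y'c sc] clen_S[OF s(2)] by simp
      then have ly': "len y' = m" using l1 ly by simp
      have "A y'" using Suc y'K ly' by simp
      then show "A y" using P[of "len (inv y' \<otimes> z)"] s(1) yy ly ly' by simp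
    qed
  qed
  assume "y \<in> WP K"
  then show ?thesis using all A_def by blast
qed


lemma long1:
  assumes K: "K \<subseteq> S" and zK: "z \<in> WP K" and desc: "\<forall>s\<in>K. len (z \<otimes> s) < len z"
  shows "finite (WP K) \<and> longest G S K = z"
proof
  have fK: "finite K" using K finS finite_subset by blast
  have "WP K \<subseteq> wprod G ` {xs. set xs \<subseteq> K \<and> length xs \<le> len z}"
  proof
    fix y assume yK: "y \<in> WP K"
    obtain ys where ys: "set ys \<subseteq> K" "wprod G ys = y" "length ys = len y" using WP_red[OF K yK] by blast
    have "len z = len y + len (inv y \<otimes> z)" using star[OF K zK desc yK] .
    then show "y \<in> wprod G ` {xs. set xs \<subseteq> K \<and> length xs \<le> len z}" using ys by force
  qed
  moreover have "finite {xs. set xs \<subseteq> K \<and> length xs \<le> len z}" using finite_lists_length_le[OF fK] .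
  ultimately show "finite (WP K)" using finite_subset by blast
  have max: "\<forall>x\<in>WP K. len x \<le> len z" using star[OF K zK desc] by fastforce
  show "longest G S K = z"
    unfolding longest_def
  proof (rule the_equality)
    show "z \<in> WP K \<and> (\<forall>x\<in>WP K. len x \<le> len z)" using zK max by simp
  next
    fix w assume w: "w \<in> WP K \<and> (\<forall>x\<in>WP K. len x \<le> len w)"
    then have "len z \<le> len w" using zK by blast
    moreover have e: "len z = len w + len (inv w \<otimes> z)" using star[OF K zK desc] w by blast
    ultimately have "len (inv w \<otimes> z) = 0" by simp
    moreover have wc: "w \<in> carrier G" using w WP_carr[OF K] by blast
    moreover have zc: "z \<in> carrier G" using zK WP_carr[OF K] by blast
    ultimately have "inv w \<otimes> z = \<one>" using clen_zero by simp
    then show "w = z" using wc zc by (metis inv_closed inv_inv inv_equality)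
  qed
qed

lemma long2:
  assumes K: "K \<subseteq> S" and fin: "finite (WP K)"
  shows "\<exists>m\<in>WP K. (\<forall>s\<in>K. len (m \<otimes> s) < len m) \<and> longest G S K = m"
proof -
  have ne: "len ` WP K \<noteq> {}" using one_WP by blast
  have "Max (len ` WP K) \<in> len ` WP K" using Max_in[OF finite_imageI[OF fin] ne] .
  then obtain m where m: "m \<in> WP K" "len m = Max (len ` WP K)" by auto
  have mx: "\<forall>x\<in>WP K. len x \<le> len m"
  proof
    fix x assume "x \<in> WP K"
    then have "len x \<in> len ` WP K" by blast
    then show "len x \<le> len m" using m(2) Max_ge[OF finite_imageI[OF fin]] by simp
  qed
  have mc: "m \<in> carrier G" using m WP_carr[OF K] by blast
  have desc: "\<forall>s\<in>K. len (m \<otimes> s) < len m"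
  proof
    fix s assume s: "s \<in> K"
    have "m \<otimes> s \<in> WP K" using WP_mult[OF K m(1) WP_gen[OF s K]] .
    then have "len (m \<otimes> s) \<le> len m" using mx by blast
    then show "len (m \<otimes> s) < len m" using clen_right[of s m] s K mc by auto
  qed
  then show ?thesis using long1[OF K m(1) desc] m(1) by blast
qed

lemma cond_one: "w \<in> carrier G \<Longrightarrow> condM \<one> w \<longleftrightarrow> finite (WP (sp w)) \<and> w = longest G S (sp w)"
proof -
  assume w: "w \<in> carrier G"
  have T: "sp w \<subseteq> S" using supp_S[OF w] .
  have "w \<in> Xr {}" unfolding minreps_def using w by simp
  then have pq0: "pq {} w = w" using pc_Xr[of "{}" w] by simp
  have c1: "condM \<one> w \<longleftrightarrow> (\<forall>s\<in>sp w. len (w \<otimes> s) < len w)"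
  proof
    assume "condM \<one> w"
    then have "{} = sp w - Des w \<or> \<one> = w" unfolding condM_def using pq0 by simp
    then show "\<forall>s\<in>sp w. len (w \<otimes> s) < len w" unfolding descents_def by auto
  next
    assume "\<forall>s\<in>sp w. len (w \<otimes> s) < len w"
    then have "{} = sp w - Des w" unfolding descents_def using T by auto
    then show "condM \<one> w" unfolding condM_def using pq0 by simp
  qed
  show ?thesis
  proof
    assume "condM \<one> w"
    then have "\<forall>s\<in>sp w. len (w \<otimes> s) < len w" using c1 by simp
    then show "finite (WP (sp w)) \<and> w = longest G S (sp w)" using long1[OF T WP_supp[OF w]] by simp
  next
    assume a: "finite (WP (sp w)) \<and> w = longest G S (sp w)"
    then obtain m where "m \<in> WP (sp w)" "\<forall>s\<in>sp w. len (m \<otimes> s) < len m" "longest G S (sp w) = m"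
      using long2[OF T] by blast
    then show "condM \<one> w" using a c1 by simp
  qed
qed

lemma main_loc:
  assumes "u \<in> carrier G" and "v \<in> carrier G" and "cox_le G S u v"
  shows "mobius (cox_le G S) (carrier G) u v =
           (if supp G S u = supp G S v - descents G S (par_quot G S (supp G S u) v) \<or> u = v
            then (-1::int) ^ (card (supp G S v) - card (supp G S u)) else 0) \<and>
         (\<forall>w\<in>carrier G. mobius (cox_le G S) (carrier G) \<one> w =
           (if finite (parabolic G (supp G S w)) \<and> w = longest G S (supp G S w)
            then (-1::int) ^ card (supp G S w) else 0))"
proof
  show "mobius (cox_le G S) (carrier G) u v =
           (if supp G S u = supp G S v - descents G S (par_quot G S (supp G S u) v) \<or> u = v
            then (-1::int) ^ (card (supp G S v) - card (supp G S u)) else 0)"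
    unfolding mobius_eq Fm_def condM_def using assms by simp
  show "\<forall>w\<in>carrier G. mobius (cox_le G S) (carrier G) \<one> w =
           (if finite (parabolic G (supp G S w)) \<and> w = longest G S (supp G S w)
            then (-1::int) ^ card (supp G S w) else 0)"
  proof
    fix w assume w: "w \<in> carrier G"
    have "mobius (cox_le G S) (carrier G) \<one> w = (if condM \<one> w then (-1::int) ^ (card (sp w) - card (sp \<one>)) else 0)"
      unfolding mobius_eq Fm_def using w le_one[OF w] by simp
    then show "mobius (cox_le G S) (carrier G) \<one> w =
           (if finite (parabolic G (supp G S w)) \<and> w = longest G S (supp G S w)
            then (-1::int) ^ card (supp G S w) else 0)" using cond_one[OF w] by simp
  qed
qed

end

lemma coxl_intro: "coxeter_system G S \<Longrightarrow> finite S \<Longrightarrow> coxl G S"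
  unfolding coxeter_system_def coxl_def coxl_axioms_def by blast

theorem theorem3:
  fixes G :: "'a monoid" and S :: "'a set" and u v :: 'a
  assumes "coxeter_system G S" and "finite S"
    and "u \<in> carrier G" and "v \<in> carrier G" and "cox_le G S u v"
  shows "mobius (cox_le G S) (carrier G) u v =
           (if supp G S u = supp G S v - descents G S (par_quot G S (supp G S u) v) \<or> u = v
            then (-1::int) ^ (card (supp G S v) - card (supp G S u)) else 0) \<and>
         (\<forall>w\<in>carrier G. mobius (cox_le G S) (carrier G) \<one>\<^bsub>G\<^esub> w =
           (if finite (parabolic G (supp G S w)) \<and> w = longest G S (supp G S w)
            then (-1::int) ^ card (supp G S w) else 0))"
proof -
  interpret coxl G S using coxl_intro[OF assms(1,2)] .
  show ?thesis using main_loc[OF assms(3-5)] .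
qed

end
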